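(* Let $d\in\mathbb{N}$ and let $\eta,\xi_1,\dots,\xi_d\in L^2(\mathbb{R})$ be linearly independent with $|\eta|=1$; put $\xi=(\xi_1,\dots,\xi_d)$. Then there exists a constant $C(\eta,\xi)\in\mathbb{R}$ (independent of $p$) such that for every $1\le p<\infty$ and every $\varphi\in\mathcal{P}_\xi$, $$\|P_\eta\varphi\|_{L^p(\mu)}\le C(\eta,\xi)\,\|\varphi\|_{L^p(\mu)}.$$ Consequently, for each $1\le p<\infty$, $P_\eta$ extends uniquely to a bounded linear operator from the closure $\overline{\mathcal{P}_\xi}^{L^p(\mu)}$ to $L^p(\mu)$.
   Context: Let $\mathcal{S}(\mathbb{R})$ be the Schwartz space and $\mathcal{S}'(\mathbb{R})$ its dual, with dual pairing $\langle\cdot,\cdot\rangle$ extending the $L^2(\mathbb{R})$ inner product (bilinearly extended to complex functions); $|\cdot|$ is the $L^2$ norm. The white noise measure $\mu$ on $\mathcal{S}'(\mathbb{R})$ is given by $\int \exp(i\langle \omega,\xi\rangle)d\mu(\omega)=\exp(-\tfrac12\langle\xi,\xi\rangle)$; for $\xi\in L^2(\mathbb{R})$, $\langle\cdot,\xi\rangle$ is defined as an $L^2(\mu)$-limit, and $(\langle\cdot,\xi_1\rangle,\dots,\langle\cdot,\xi_d\rangle)$ is centered Gaussian with covariance $(\langle\xi_k,\xi_l\rangle)_{k,l}$. $L^p(\mu)$ is the space of complex-valued $p$-integrable functions on $(\mathcal{S}'(\mathbb{R}),\mu)$. $\mathcal{P}_\xi:=\{P(\langle\cdot,\xi_1\rangle,\dots,\langle\cdot,\xi_d\rangle):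 P \text{ polynomial on }\mathbb{R}^d\}$. For $f^{(n)}\in L^2(\mathbb{R}^n;\mathbb{C})_{sym}$, $\langle :\cdot^{\otimes n}:, f^{(n)}\rangle$ is the $n$-th multiple Wiener–Itô integral; $\mathcal{G}$ is the space of $\varphi=\sum_n\langle :\cdot^{\otimes n}:,\varphi^{(n)}\rangle\in L^2(\mu)$ with $\sum_n n!2^{qn}|\varphi^{(n)}|^2<\infty$ for all $q\in\mathbb{N}_0$; $\mathcal{P}_\xi\subset\mathcal{G}$. For $|\eta|=1$ let $P_{\perp,\eta}\xi:=\xi-\langle\xi,\eta\rangle\eta$. The projection operator $P_\eta$ is the unique continuous linear operator $\mathcal{G}\to\mathcal{G}$ which on smooth polynomials $\varphi=\sum_{n=0}^N\langle :\cdot^{\otimes n}:,\varphi^{(n)}\rangle$ ($\varphi^{(n)}\in\mathrm{span}\{\zeta^{\otimes n}:\zeta\in\mathcal{S}(\mathbb{R};\mathbb{C})\}$) is given by $$P_\eta\varphi=\sum_{n=0}^N\sum_{k=0}^{\lfloor n/2\rfloor}\frac{n!(-1)^k}{k!(n-2k)!2^k}\Big\langle :\cdot^{\otimes(n-2k)}:, P_{\perp,\eta}^{\otimes(n-2k)}\big(\eta^{\otimes 2k}\hat\otimes_{2k}\varphi^{(n)}\big)\Big\rangle,$$ $(\eta^{\otimes 2k}\hat\otimes_{2k}\varphi^{(n)})(x)=\int_{\mathbb{R}^{2k}}\varphi^{(n)}(y_1,\dots,y_{2k},x_1,\dots,x_{n-2k})\eta(y_1)\cdots\eta(y_{2k})dy$.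 (On $\mathcal{P}_\xi$ it acts by $P(\langle\cdot,\xi_1\rangle,\dots)\mapsto P(\langle\cdot,P_{\perp,\eta}\xi_1\rangle,\dots)$.) *)

theory Defs
  imports "HOL-Probability.Probability"
begin

definition L2 :: "(real \<Rightarrow> real) set" where
  "L2 = {f. f \<in> borel_measurable lborel \<and> integrable lborel (\<lambda>x. (f x)\<^sup>2)}"

definition ip :: "(real \<Rightarrow> real) \<Rightarrow> (real \<Rightarrow> real) \<Rightarrow> real" where
  "ip f g = (LINT x|lborel. f x * g x)"

definition L2_lin_indep :: "(real \<Rightarrow> real) list \<Rightarrow> bool" where
  "L2_lin_indep fs \<longleftrightarrow>
     (\<forall>c :: nat \<Rightarrow> real. (AE x in lborel. (\<Sum>k<length fs. c k * (fs ! k) x) = 0)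
        \<longrightarrow> (\<forall>k<length fs. c k = 0))"

definition perp :: "(real \<Rightarrow> real) \<Rightarrow> (real \<Rightarrow> real) \<Rightarrow> (real \<Rightarrow> real)" where
  "perp \<eta> f = (\<lambda>x. f x - ip f \<eta> * \<eta> x)"

text \<open>Isonormal Gaussian process on L2(R) (the map xi to <.,xi> on the white noise space):
  linear almost surely and with characteristic functional exp(-|xi|^2/2).\<close>
definition isonormal :: "'a measure \<Rightarrow> ((real \<Rightarrow> real) \<Rightarrow> 'a \<Rightarrow> real) \<Rightarrow> bool" where
  "isonormal M W \<longleftrightarrow> prob_space M \<and>
     (\<forall>f\<in>L2. W f \<in> borel_measurable M) \<and>
     (\<forall>f\<in>L2. \<forall>g\<in>L2. \<forall>a b :: real.
        AE \<omega> in M. W (\<lambda>x. a * f x + b * g x) \<omega> = a * W f \<omega> + b * W g \<omega>) \<and>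
     (\<forall>f\<in>L2. (\<integral>\<omega>. exp (\<i> * complex_of_real (W f \<omega>)) \<partial>M)
                = exp (- complex_of_real (ip f f / 2)))"

text \<open>Complex polynomials in d real variables, given by a finitely supported coefficient
  function on exponent vectors (only the first d exponents matter).\<close>
definition is_poly_coeffs :: "((nat \<Rightarrow> nat) \<Rightarrow> complex) \<Rightarrow> bool" where
  "is_poly_coeffs c \<longleftrightarrow> finite {\<alpha>. c \<alpha> \<noteq> 0}"

definition poly_eval :: "((nat \<Rightarrow> nat) \<Rightarrow> complex) \<Rightarrow> nat \<Rightarrow> (nat \<Rightarrow> real) \<Rightarrow> complex" where
  "poly_eval c d x = (\<Sum>\<alpha>\<in>{\<alpha>. c \<alpha> \<noteq> 0}. c \<alpha> * (\<Prod>k<d. complex_of_real (x k) ^ \<alpha> k))"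

definition poly_fun :: "((real \<Rightarrow> real) \<Rightarrow> 'a \<Rightarrow> real) \<Rightarrow> ((nat \<Rightarrow> nat) \<Rightarrow> complex)
                        \<Rightarrow> (real \<Rightarrow> real) list \<Rightarrow> 'a \<Rightarrow> complex" where
  "poly_fun W c xs = (\<lambda>\<omega>. poly_eval c (length xs) (\<lambda>k. W (xs ! k) \<omega>))"

definition Lp_norm :: "'a measure \<Rightarrow> real \<Rightarrow> ('a \<Rightarrow> complex) \<Rightarrow> real" where
  "Lp_norm M p f = (LINT \<omega>|M. cmod (f \<omega>) powr p) powr (1 / p)"

definition in_Lp :: "'a measure \<Rightarrow> real \<Rightarrow> ('a \<Rightarrow> complex) \<Rightarrow> bool" where
  "in_Lp M p f \<longleftrightarrow> f \<in> borel_measurable M \<and> integrable M (\<lambda>\<omega>. cmod (f \<omega>) powr p)"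

definition Lp_closure_poly :: "'a measure \<Rightarrow> real \<Rightarrow> ((real \<Rightarrow> real) \<Rightarrow> 'a \<Rightarrow> real)
                              \<Rightarrow> (real \<Rightarrow> real) list \<Rightarrow> ('a \<Rightarrow> complex) set" where
  "Lp_closure_poly M p W xs = {f. in_Lp M p f \<and>
     (\<exists>cs :: nat \<Rightarrow> (nat \<Rightarrow> nat) \<Rightarrow> complex. (\<forall>n. is_poly_coeffs (cs n)) \<and>
        (\<lambda>n. Lp_norm M p (\<lambda>\<omega>. poly_fun W (cs n) xs \<omega> - f \<omega>)) \<longlonglongrightarrow> 0)}"

definition bounded_ext :: "'a measure \<Rightarrow> real \<Rightarrow> ((real \<Rightarrow> real) \<Rightarrow> 'a \<Rightarrow> real)
        \<Rightarrow> (real \<Rightarrow> real) \<Rightarrow> (real \<Rightarrow> real) list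
        \<Rightarrow> (('a \<Rightarrow> complex) \<Rightarrow> ('a \<Rightarrow> complex)) \<Rightarrow> bool" where
  "bounded_ext M p W \<eta> xs T \<longleftrightarrow>
     (\<forall>f\<in>Lp_closure_poly M p W xs. in_Lp M p (T f)) \<and>
     (\<forall>f\<in>Lp_closure_poly M p W xs. \<forall>g\<in>Lp_closure_poly M p W xs. \<forall>a b :: complex.
        AE \<omega> in M. T (\<lambda>\<omega>'. a * f \<omega>' + b * g \<omega>') \<omega> = a * T f \<omega> + b * T g \<omega>) \<and>
     (\<exists>K. \<forall>f\<in>Lp_closure_poly M p W xs. Lp_norm M p (T f) \<le> K * Lp_norm M p f) \<and>
     (\<forall>c. is_poly_coeffs c \<longrightarrow>
        (AE \<omega> in M. T (poly_fun W c xs) \<omega> = poly_fun W c (map (perp \<eta>) xs) \<omega>))"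

end

theory Submission
  imports Defs "HOL-Probability.Probability"
begin

lemma uniq1d_norm:
  fixes N :: "'b measure" and N' :: "'c measure"
  assumes N: "prob_space N" and N': "prob_space N'"
    and V[measurable]: "V \<in> borel_measurable N" and V'[measurable]: "V' \<in> borel_measurable N'"
    and r[measurable]: "r \<in> borel_measurable N" and r'[measurable]: "r' \<in> borel_measurable N'"
    and rnn: "\<And>x. 0 \<le> r x" and rnn': "\<And>x. 0 \<le> r' x"
    and rb: "\<And>x. r x \<le> c" and rb': "\<And>x. r' x \<le> c'"
    and m: "(\<integral>x. r x \<partial>N) = 1" and m': "(\<integral>x. r' x \<partial>N') = 1"
    and ft: "\<And>t. (\<integral>x. complex_of_real (r x) * iexp (t * V x) \<partial>N) = (\<integral>x. complex_of_real (r' x) * iexp (t * V' x) \<partial>N')"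
    and B[measurable]: "B \<in> sets borel"
  shows "(\<integral>x. r x * indicator B (V x) \<partial>N) = (\<integral>x. r' x * indicator B (V' x) \<partial>N')"
proof -
  interpret N: prob_space N by fact
  interpret N': prob_space N' by fact
  have intr: "integrable N r" using rnn rb
    by (intro N.integrable_const_bound[of _ c]) auto
  have intr': "integrable N' r'" using rnn' rb'
    by (intro N'.integrable_const_bound[of _ c']) auto
  define \<mu> where "\<mu> = distr (density N r) borel V"
  define \<mu>' where "\<mu>' = distr (density N' r') borel V'"
  have em: "emeasure \<mu> A = (\<integral>\<^sup>+x. ennreal (r x * indicator A (V x)) \<partial>N)" if "A \<in> sets borel" for A
    unfolding \<mu>_def using that
    by (subst emeasure_distr) (auto simp: emeasure_density nn_integral_set_ennreal[symmetric] mult.commute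
       intro!: nn_integral_cong split: split_indicator)
  have em': "emeasure \<mu>' A = (\<integral>\<^sup>+x. ennreal (r' x * indicator A (V' x)) \<partial>N')" if "A \<in> sets borel" for A
    unfolding \<mu>'_def using that
    by (subst emeasure_distr) (auto simp: emeasure_density nn_integral_set_ennreal[symmetric] mult.commute
       intro!: nn_integral_cong split: split_indicator)
  have rd: "real_distribution \<mu>"
    unfolding real_distribution_def real_distribution_axioms_def
  proof (intro conjI prob_spaceI)
    show "sets \<mu> = sets borel" by (simp add: \<mu>_def)
    have "emeasure \<mu> (space \<mu>) = (\<integral>\<^sup>+x. ennreal (r x) \<partial>N)"
      using em[of UNIV] by (simp add: \<mu>_def)
    also have "\<dots> = ennreal (\<integral>x. r x \<partial>N)"
      by (rule nn_integral_eq_integral[OF intr]) (simp add: rnn)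
    finally show "emeasure \<mu> (space \<mu>) = 1" using m by simp
  qed
  have rd': "real_distribution \<mu>'"
    unfolding real_distribution_def real_distribution_axioms_def
  proof (intro conjI prob_spaceI)
    show "sets \<mu>' = sets borel" by (simp add: \<mu>'_def)
    have "emeasure \<mu>' (space \<mu>') = (\<integral>\<^sup>+x. ennreal (r' x) \<partial>N')"
      using em'[of UNIV] by (simp add: \<mu>'_def)
    also have "\<dots> = ennreal (\<integral>x. r' x \<partial>N')"
      by (rule nn_integral_eq_integral[OF intr']) (simp add: rnn')
    finally show "emeasure \<mu>' (space \<mu>') = 1" using m' by simp
  qed
  have "char \<mu> = char \<mu>'"
  proof
    fix t
    have "char \<mu> t = (\<integral>x. complex_of_real (r x) * iexp (t * V x) \<partial>N)"
      unfolding char_def \<mu>_def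
      by (subst integral_distr) (auto simp: integral_density rnn scaleR_conv_of_real)
    moreover have "char \<mu>' t = (\<integral>x. complex_of_real (r' x) * iexp (t * V' x) \<partial>N')"
      unfolding char_def \<mu>'_def
      by (subst integral_distr) (auto simp: integral_density rnn' scaleR_conv_of_real)
    ultimately show "char \<mu> t = char \<mu>' t" using ft by simp
  qed
  then have eq: "\<mu> = \<mu>'" using Levy_uniqueness rd rd' by blast
  have i1: "integrable N (\<lambda>x. r x * indicator B (V x))"
    by (rule Bochner_Integration.integrable_bound[OF intr]) (auto simp: rnn split: split_indicator)
  have i2: "integrable N' (\<lambda>x. r' x * indicator B (V' x))"
    by (rule Bochner_Integration.integrable_bound[OF intr']) (auto simp: rnn' split: split_indicator)
  have "ennreal (\<integral>x. r x * indicator B (V x) \<partial>N) = emeasure \<mu> B"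
    using em[OF B] by (subst nn_integral_eq_integral[OF i1, symmetric]) (auto simp: rnn)
  also have "\<dots> = emeasure \<mu>' B" using eq by simp
  also have "\<dots> = ennreal (\<integral>x. r' x * indicator B (V' x) \<partial>N')"
    using em'[OF B] by (subst nn_integral_eq_integral[OF i2, symmetric]) (auto simp: rnn')
  finally show ?thesis
    by (subst (asm) ennreal_inj) (auto intro!: integral_nonneg_AE simp: rnn rnn')
qed

lemma uniq1d:
  fixes N :: "'b measure" and N' :: "'c measure"
  assumes N: "prob_space N" and N': "prob_space N'"
    and V[measurable]: "V \<in> borel_measurable N" and V'[measurable]: "V' \<in> borel_measurable N'"
    and r[measurable]: "r \<in> borel_measurable N" and r'[measurable]: "r' \<in> borel_measurable N'"
    and rnn: "\<And>x. 0 \<le> r x" and rnn': "\<And>x. 0 \<le> r' x"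
    and rb: "\<And>x. r x \<le> c" and rb': "\<And>x. r' x \<le> c'"
    and ft: "\<And>t. (\<integral>x. complex_of_real (r x) * iexp (t * V x) \<partial>N) = (\<integral>x. complex_of_real (r' x) * iexp (t * V' x) \<partial>N')"
    and B[measurable]: "B \<in> sets borel"
  shows "(\<integral>x. r x * indicator B (V x) \<partial>N) = (\<integral>x. r' x * indicator B (V' x) \<partial>N')"
proof -
  interpret N: prob_space N by fact
  interpret N': prob_space N' by fact
  have intr: "integrable N r" using rnn rb
    by (intro N.integrable_const_bound[of _ c]) auto
  have intr': "integrable N' r'" using rnn' rb'
    by (intro N'.integrable_const_bound[of _ c']) auto
  have i1: "integrable N (\<lambda>x. r x * indicator B (V x))"
    by (rule Bochner_Integration.integrable_bound[OF intr]) (auto simp: rnn split: split_indicator)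
  have i2: "integrable N' (\<lambda>x. r' x * indicator B (V' x))"
    by (rule Bochner_Integration.integrable_bound[OF intr']) (auto simp: rnn' split: split_indicator)
  define m where "m = (\<integral>x. r x \<partial>N)"
  have "complex_of_real m = complex_of_real (\<integral>x. r' x \<partial>N')"
    using ft[of 0] unfolding m_def by simp
  then have mm: "(\<integral>x. r' x \<partial>N') = m" by simp
  have m0: "m \<ge> 0" unfolding m_def by (rule integral_nonneg_AE) (simp add: rnn)
  show ?thesis
  proof (cases "m = 0")
    case True
    have "AE x in N. r x = 0"
      using True intr unfolding m_def by (subst (asm) integral_nonneg_eq_0_iff_AE) (auto simp: rnn)
    then have z1: "(\<integral>x. r x * indicator B (V x) \<partial>N) = 0"
      by (subst integral_cong_AE[where g="\<lambda>_. 0"]) auto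
    have "AE x in N'. r' x = 0"
      using True mm intr' integral_nonneg_eq_0_iff_AE[of N' r'] rnn' by auto
    then have z2: "(\<integral>x. r' x * indicator B (V' x) \<partial>N') = 0"
      by (subst integral_cong_AE[where g="\<lambda>_. 0"]) auto
    show ?thesis using z1 z2 by simp
  next
    case False
    then have mp: "m > 0" using m0 by simp
    have "(\<integral>x. r x / m * indicator B (V x) \<partial>N) = (\<integral>x. r' x / m * indicator B (V' x) \<partial>N')"
    proof (rule uniq1d_norm[OF N N' V V', of "\<lambda>x. r x / m" "\<lambda>x. r' x / m" "c / m" "c' / m"])
      show "\<And>x. 0 \<le> r x / m" "\<And>x. 0 \<le> r' x / m" using mp rnn rnn' by auto
      show "\<And>x. r x / m \<le> c / m" "\<And>x. r' x / m \<le> c' / m" using mp rb rb' by (auto simp: divide_right_mono)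
      show "(\<integral>x. r x / m \<partial>N) = 1" using mp by (simp add: m_def)
      show "(\<integral>x. r' x / m \<partial>N') = 1" using mp mm by simp
      show "B \<in> sets borel" by fact
      fix t
      have "(\<integral>x. complex_of_real (r x / m) * iexp (t * V x) \<partial>N) = (\<integral>x. complex_of_real (r x) * iexp (t * V x) \<partial>N) / complex_of_real m"
        by (simp add: field_simps)
      also have "\<dots> = (\<integral>x. complex_of_real (r' x) * iexp (t * V' x) \<partial>N') / complex_of_real m" using ft by simp
      also have "\<dots> = (\<integral>x. complex_of_real (r' x / m) * iexp (t * V' x) \<partial>N')"
        by (simp add: field_simps)
      finally show "(\<integral>x. complex_of_real (r x / m) * iexp (t * V x) \<partial>N) = (\<integral>x. complex_of_real (r' x / m) * iexp (t * V' x) \<partial>N')" .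
    qed auto
    then have "(\<integral>x. r x * indicator B (V x) \<partial>N) / m = (\<integral>x. r' x * indicator B (V' x) \<partial>N') / m"
      by simp
    then show ?thesis using mp by simp
  qed
qed

lemma iexp_split_integral:
  assumes N: "prob_space N" and q[measurable]: "q \<in> borel_measurable N" and S[measurable]: "S \<in> borel_measurable N"
    and qb: "\<And>x. \<bar>q x\<bar> \<le> c"
  shows "(\<integral>x. complex_of_real (q x) * iexp (S x) \<partial>N) =
     complex_of_real (\<integral>x. q x * cos (S x) \<partial>N) + \<i> * complex_of_real (\<integral>x. q x * sin (S x) \<partial>N)"
proof -
  interpret N: prob_space N by fact
  have i1: "integrable N (\<lambda>x. q x * cos (S x))"
  proof (rule N.integrable_const_bound[of _ c])
    show "AE x in N. norm (q x * cos (S x)) \<le> c"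
    proof (rule AE_I2)
      fix x
      have "\<bar>q x\<bar> * \<bar>cos (S x)\<bar> \<le> \<bar>q x\<bar>"
        using abs_cos_le_one[of "S x"] by (simp add: mult_left_le)
      then show "norm (q x * cos (S x)) \<le> c" using qb[of x] by (simp add: abs_mult)
    qed
  qed simp
  have i2: "integrable N (\<lambda>x. q x * sin (S x))"
  proof (rule N.integrable_const_bound[of _ c])
    show "AE x in N. norm (q x * sin (S x)) \<le> c"
    proof (rule AE_I2)
      fix x
      have "\<bar>q x\<bar> * \<bar>sin (S x)\<bar> \<le> \<bar>q x\<bar>"
        using abs_sin_le_one[of "S x"] by (simp add: mult_left_le)
      then show "norm (q x * sin (S x)) \<le> c" using qb[of x] by (simp add: abs_mult)
    qed
  qed simp
  have "(\<lambda>x. complex_of_real (q x) * iexp (S x)) = (\<lambda>x. complex_of_real (q x * cos (S x)) + \<i> * complex_of_real (q x * sin (S x)))"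
    by (auto simp: cis_conv_exp[symmetric] cis.ctr complex_eq_iff)
  moreover have c1: "integrable N (\<lambda>x. complex_of_real (q x * cos (S x)))" using i1 by (rule integrable_of_real)
  moreover have c2: "integrable N (\<lambda>x. \<i> * complex_of_real (q x * sin (S x)))" using integrable_of_real[OF i2] by (rule integrable_mult_right)
  ultimately show ?thesis
    by (simp only: Bochner_Integration.integral_add[OF c1 c2] integral_mult_right_zero integral_complex_of_real)
qed

lemma cos_weight_ft:
  assumes N: "prob_space N" and q[measurable]: "q \<in> borel_measurable N" and S[measurable]: "S \<in> borel_measurable N"
    and V[measurable]: "V \<in> borel_measurable N"
    and qb: "\<And>x. \<bar>q x\<bar> \<le> c"
  shows "(\<integral>x. complex_of_real (q x * (1 + cos (S x))) * iexp (t * V x) \<partial>N) =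
     (\<integral>x. complex_of_real (q x) * iexp (0 * S x + t * V x) \<partial>N)
   + (\<integral>x. complex_of_real (q x) * iexp (1 * S x + t * V x) \<partial>N) / 2
   + (\<integral>x. complex_of_real (q x) * iexp ((-1) * S x + t * V x) \<partial>N) / 2"
proof -
  interpret N: prob_space N by fact
  have int: "integrable N (\<lambda>x. complex_of_real (q x) * iexp (a * S x + t * V x))" for a
    by (rule N.integrable_const_bound[of _ c]) (auto simp: norm_mult qb)
  have "(\<lambda>x. complex_of_real (q x * (1 + cos (S x))) * iexp (t * V x)) =
     (\<lambda>x. complex_of_real (q x) * iexp (0 * S x + t * V x)
   + complex_of_real (q x) * iexp (1 * S x + t * V x) / 2
   + complex_of_real (q x) * iexp ((-1) * S x + t * V x) / 2)"
    by (auto simp: cos_exp_eq cos_of_real[symmetric] exp_add[symmetric] field_simps simp del: cos_of_real)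
  then show ?thesis using int[of 0] int[of 1] int[of "-1"]
    by (simp del: mult_zero_left mult_1 mult_minus_left of_real_minus)
qed

lemma sin_weight_ft:
  assumes N: "prob_space N" and q[measurable]: "q \<in> borel_measurable N" and S[measurable]: "S \<in> borel_measurable N"
    and V[measurable]: "V \<in> borel_measurable N"
    and qb: "\<And>x. \<bar>q x\<bar> \<le> c"
  shows "(\<integral>x. complex_of_real (q x * (1 + sin (S x))) * iexp (t * V x) \<partial>N) =
     (\<integral>x. complex_of_real (q x) * iexp (0 * S x + t * V x) \<partial>N)
   + ((\<integral>x. complex_of_real (q x) * iexp (1 * S x + t * V x) \<partial>N)
   - (\<integral>x. complex_of_real (q x) * iexp ((-1) * S x + t * V x) \<partial>N)) / (2 * \<i>)"
proof -
  interpret N: prob_space N by fact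
  have int: "integrable N (\<lambda>x. complex_of_real (q x) * iexp (a * S x + t * V x))" for a
    by (rule N.integrable_const_bound[of _ c]) (auto simp: norm_mult qb)
  have "(\<lambda>x. complex_of_real (q x * (1 + sin (S x))) * iexp (t * V x)) =
     (\<lambda>x. complex_of_real (q x) * iexp (0 * S x + t * V x)
   + (complex_of_real (q x) * iexp (1 * S x + t * V x)
   - complex_of_real (q x) * iexp ((-1) * S x + t * V x)) / (2 * \<i>))"
    by (auto simp: sin_exp_eq sin_of_real[symmetric] exp_add[symmetric] field_simps simp del: sin_of_real)
  then show ?thesis using int[of 0] int[of 1] int[of "-1"]
    by (simp del: mult_zero_left mult_1 mult_minus_left of_real_minus)
qed

lemma bint:
  fixes f :: "'b \<Rightarrow> real"
  assumes "prob_space N" "f \<in> borel_measurable N" "\<And>x. \<bar>f x\<bar> \<le> c"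
  shows "integrable N f"
proof -
  interpret prob_space N by fact
  show ?thesis by (rule integrable_const_bound[of _ c]) (use assms in auto)
qed

lemma sum_shift_Suc:
  fixes V :: "nat \<Rightarrow> real"
  shows "(\<Sum>j<Suc m. (\<lambda>j. if j = m then t else \<sigma> * s j) j * V j) = \<sigma> * (\<Sum>j<m. s j * V j) + t * V m"
  by (simp add: sum_distrib_left mult.assoc)

lemma uniq_multi:
  fixes N :: "'b measure" and N' :: "'c measure" and V :: "nat \<Rightarrow> 'b \<Rightarrow> real" and V' :: "nat \<Rightarrow> 'c \<Rightarrow> real"
  assumes N: "prob_space N" and N': "prob_space N'"
    and V[measurable]: "\<And>j. V j \<in> borel_measurable N" and V'[measurable]: "\<And>j. V' j \<in> borel_measurable N'"
  shows "\<rho> \<in> borel_measurable N \<Longrightarrow> \<rho>' \<in> borel_measurable N' \<Longrightarrow> (\<And>x. 0 \<le> \<rho> x) \<Longrightarrow> (\<And>x. \<rho> x \<le> c)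
    \<Longrightarrow> (\<And>x. 0 \<le> \<rho>' x) \<Longrightarrow> (\<And>x. \<rho>' x \<le> c') \<Longrightarrow>
    (\<And>s. (\<integral>x. complex_of_real (\<rho> x) * iexp (\<Sum>j<m. s j * V j x) \<partial>N)
       = (\<integral>x. complex_of_real (\<rho>' x) * iexp (\<Sum>j<m. s j * V' j x) \<partial>N')) \<Longrightarrow>
    (\<And>j. j < m \<Longrightarrow> A j \<in> sets borel) \<Longrightarrow>
    (\<integral>x. \<rho> x * (\<Prod>j<m. indicator (A j) (V j x)) \<partial>N) = (\<integral>x. \<rho>' x * (\<Prod>j<m. indicator (A j) (V' j x)) \<partial>N')"
proof (induction m arbitrary: \<rho> \<rho>' c c')
  case 0
  then show ?case using "0.prems"(7)[of "\<lambda>_. 0"] by simp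
next
  case (Suc m)
  note [measurable] = Suc.prems(1,2)
  define B where "B = A m"
  have B[measurable]: "B \<in> sets borel" using Suc.prems(8) by (simp add: B_def)
  define \<rho>1 where "\<rho>1 x = \<rho> x * indicator B (V m x)" for x
  define \<rho>1' where "\<rho>1' x = \<rho>' x * indicator B (V' m x)" for x
  have c0: "0 \<le> c" using Suc.prems(3,4) order_trans by blast
  have c0': "0 \<le> c'" using Suc.prems(5,6) order_trans by blast
  have IH: "(\<integral>x. \<rho>1 x * (\<Prod>j<m. indicator (A j) (V j x)) \<partial>N) = (\<integral>x. \<rho>1' x * (\<Prod>j<m. indicator (A j) (V' j x)) \<partial>N')"
  proof (rule Suc.IH[of _ _ c c'])
    show "\<rho>1 \<in> borel_measurable N" "\<rho>1' \<in> borel_measurable N'" unfolding \<rho>1_def \<rho>1'_def by measurable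
    show "\<And>x. 0 \<le> \<rho>1 x" "\<And>x. 0 \<le> \<rho>1' x" unfolding \<rho>1_def \<rho>1'_def using Suc.prems(3,5) by auto
    show "\<And>x. \<rho>1 x \<le> c" "\<And>x. \<rho>1' x \<le> c'" unfolding \<rho>1_def \<rho>1'_def using Suc.prems(4,6) c0 c0'
      by (auto split: split_indicator)
    show "\<And>j. j < m \<Longrightarrow> A j \<in> sets borel" using Suc.prems(8) by auto
    fix s :: "nat \<Rightarrow> real"
    define S where "S x = (\<Sum>j<m. s j * V j x)" for x
    define S' where "S' x = (\<Sum>j<m. s j * V' j x)" for x
    have S[measurable]: "S \<in> borel_measurable N" unfolding S_def by measurable
    have S'[measurable]: "S' \<in> borel_measurable N'" unfolding S'_def by measurable
    have Hyp: "(\<integral>x. complex_of_real (\<rho> x) * iexp (\<sigma> * S x + t * V m x) \<partial>N)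
       = (\<integral>x. complex_of_real (\<rho>' x) * iexp (\<sigma> * S' x + t * V' m x) \<partial>N')" for \<sigma> t
      using Suc.prems(7)[of "\<lambda>j. if j = m then t else \<sigma> * s j"]
      unfolding S_def S'_def sum_shift_Suc[of m t \<sigma> s "\<lambda>j. V j _"] sum_shift_Suc[of m t \<sigma> s "\<lambda>j. V' j _"] .
    have bnd: "\<And>x. \<bar>\<rho> x\<bar> \<le> c" "\<And>x'. \<bar>\<rho>' x'\<bar> \<le> c'" using Suc.prems(3-6) by auto
    have e0: "(\<integral>x. \<rho> x * indicator B (V m x) \<partial>N) = (\<integral>x. \<rho>' x * indicator B (V' m x) \<partial>N')"
      by (rule uniq1d[OF N N' V V' Suc.prems(1,2) Suc.prems(3,5,4,6) _ B]) (use Hyp[of 0] in simp)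
    have e1: "(\<integral>x. \<rho> x * (1 + cos (S x)) * indicator B (V m x) \<partial>N) = (\<integral>x. \<rho>' x * (1 + cos (S' x)) * indicator B (V' m x) \<partial>N')"
    proof (rule uniq1d[OF N N' V V', of _ _ "2 * c" "2 * c'"])
      show "(\<lambda>x. \<rho> x * (1 + cos (S x))) \<in> borel_measurable N" "(\<lambda>x. \<rho>' x * (1 + cos (S' x))) \<in> borel_measurable N'" by measurable
      show "0 \<le> \<rho> x * (1 + cos (S x))" for x
        using Suc.prems(3) by (intro mult_nonneg_nonneg) (auto simp: cos_ge_minus_one sin_ge_minus_one add_nonneg_nonneg, smt (verit) cos_ge_minus_one sin_ge_minus_one)
      show "0 \<le> \<rho>' x * (1 + cos (S' x))" for x
        using Suc.prems(5) by (intro mult_nonneg_nonneg) (auto simp: cos_ge_minus_one sin_ge_minus_one add_nonneg_nonneg, smt (verit) cos_ge_minus_one sin_ge_minus_one)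
      show "\<rho> x * (1 + cos (S x)) \<le> 2 * c" for x
        using mult_left_mono[of "1 + cos (S x)" 2 "\<rho> x"] Suc.prems(3,4)[of x] cos_le_one[of "S x"] by linarith
      show "\<rho>' x * (1 + cos (S' x)) \<le> 2 * c'" for x
        using mult_left_mono[of "1 + cos (S' x)" 2 "\<rho>' x"] Suc.prems(5,6)[of x] cos_le_one[of "S' x"] by linarith
      show "B \<in> sets borel" by fact
      fix t
      show "(\<integral>x. complex_of_real (\<rho> x * (1 + cos (S x))) * iexp (t * V m x) \<partial>N) =
            (\<integral>x. complex_of_real (\<rho>' x * (1 + cos (S' x))) * iexp (t * V' m x) \<partial>N')"
        unfolding cos_weight_ft[OF N Suc.prems(1) S V bnd(1)] cos_weight_ft[OF N' Suc.prems(2) S' V' bnd(2)] Hyp ..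
    qed
    have e2: "(\<integral>x. \<rho> x * (1 + sin (S x)) * indicator B (V m x) \<partial>N) = (\<integral>x. \<rho>' x * (1 + sin (S' x)) * indicator B (V' m x) \<partial>N')"
    proof (rule uniq1d[OF N N' V V', of _ _ "2 * c" "2 * c'"])
      show "(\<lambda>x. \<rho> x * (1 + sin (S x))) \<in> borel_measurable N" "(\<lambda>x. \<rho>' x * (1 + sin (S' x))) \<in> borel_measurable N'" by measurable
      show "0 \<le> \<rho> x * (1 + sin (S x))" for x
        using Suc.prems(3) by (intro mult_nonneg_nonneg) (auto simp: cos_ge_minus_one sin_ge_minus_one add_nonneg_nonneg, smt (verit) cos_ge_minus_one sin_ge_minus_one)
      show "0 \<le> \<rho>' x * (1 + sin (S' x))" for x
        using Suc.prems(5) by (intro mult_nonneg_nonneg) (auto simp: cos_ge_minus_one sin_ge_minus_one add_nonneg_nonneg, smt (verit) cos_ge_minus_one sin_ge_minus_one)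
      show "\<rho> x * (1 + sin (S x)) \<le> 2 * c" for x
        using mult_left_mono[of "1 + sin (S x)" 2 "\<rho> x"] Suc.prems(3,4)[of x] sin_le_one[of "S x"] by linarith
      show "\<rho>' x * (1 + sin (S' x)) \<le> 2 * c'" for x
        using mult_left_mono[of "1 + sin (S' x)" 2 "\<rho>' x"] Suc.prems(5,6)[of x] sin_le_one[of "S' x"] by linarith
      show "B \<in> sets borel" by fact
      fix t
      show "(\<integral>x. complex_of_real (\<rho> x * (1 + sin (S x))) * iexp (t * V m x) \<partial>N) =
            (\<integral>x. complex_of_real (\<rho>' x * (1 + sin (S' x))) * iexp (t * V' m x) \<partial>N')"
        unfolding sin_weight_ft[OF N Suc.prems(1) S V bnd(1)] sin_weight_ft[OF N' Suc.prems(2) S' V' bnd(2)] Hyp ..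
    qed
    have ab: "\<bar>\<rho> x * (1 + f) * indicator B y\<bar> \<le> 2 * c" "\<bar>\<rho>' x' * (1 + f) * indicator B y\<bar> \<le> 2 * c'"
      "\<bar>\<rho> x * indicator B y\<bar> \<le> c" "\<bar>\<rho>' x' * indicator B y\<bar> \<le> c'"
      if "\<bar>f\<bar> \<le> 1" for x x' f y
    proof -
      have "\<bar>1 + f\<bar> \<le> 2" using that by linarith
      then show "\<bar>\<rho> x * (1 + f) * indicator B y\<bar> \<le> 2 * c" "\<bar>\<rho>' x' * (1 + f) * indicator B y\<bar> \<le> 2 * c'"
        using mult_mono[of "\<bar>\<rho> x\<bar>" c "\<bar>1 + f\<bar>" 2] mult_mono[of "\<bar>\<rho>' x'\<bar>" c' "\<bar>1 + f\<bar>" 2]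
          bnd(1)[of x] bnd(2)[of x'] c0 c0'
        by (auto simp: abs_mult split: split_indicator)
      show "\<bar>\<rho> x * indicator B y\<bar> \<le> c" "\<bar>\<rho>' x' * indicator B y\<bar> \<le> c'"
        using bnd(1)[of x] bnd(2)[of x'] c0 c0' by (auto simp: abs_mult split: split_indicator)
    qed
    have i_cos: "integrable N (\<lambda>x. \<rho> x * (1 + cos (S x)) * indicator B (V m x))"
      by (rule bint[OF N _ ab(1)]) auto
    have i_sin: "integrable N (\<lambda>x. \<rho> x * (1 + sin (S x)) * indicator B (V m x))"
      by (rule bint[OF N _ ab(1)]) auto
    have i_0: "integrable N (\<lambda>x. \<rho> x * indicator B (V m x))"
      by (rule bint[OF N _ ab(3)[where f=0]]) auto
    have i_cos': "integrable N' (\<lambda>x. \<rho>' x * (1 + cos (S' x)) * indicator B (V' m x))"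
      by (rule bint[OF N' _ ab(2)]) auto
    have i_sin': "integrable N' (\<lambda>x. \<rho>' x * (1 + sin (S' x)) * indicator B (V' m x))"
      by (rule bint[OF N' _ ab(2)]) auto
    have i_0': "integrable N' (\<lambda>x. \<rho>' x * indicator B (V' m x))"
      by (rule bint[OF N' _ ab(4)[where f=0]]) auto
    have rc: "(\<integral>x. \<rho>1 x * cos (S x) \<partial>N) = (\<integral>x. \<rho> x * (1 + cos (S x)) * indicator B (V m x) \<partial>N) - (\<integral>x. \<rho> x * indicator B (V m x) \<partial>N)"
      by (subst Bochner_Integration.integral_diff[OF i_cos i_0, symmetric]) (auto intro!: integral_cong simp: \<rho>1_def algebra_simps)
    have rs: "(\<integral>x. \<rho>1 x * sin (S x) \<partial>N) = (\<integral>x. \<rho> x * (1 + sin (S x)) * indicator B (V m x) \<partial>N) - (\<integral>x. \<rho> x * indicator B (V m x) \<partial>N)"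
      by (subst Bochner_Integration.integral_diff[OF i_sin i_0, symmetric]) (auto intro!: integral_cong simp: \<rho>1_def algebra_simps)
    have rc': "(\<integral>x. \<rho>1' x * cos (S' x) \<partial>N') = (\<integral>x. \<rho>' x * (1 + cos (S' x)) * indicator B (V' m x) \<partial>N') - (\<integral>x. \<rho>' x * indicator B (V' m x) \<partial>N')"
      by (subst Bochner_Integration.integral_diff[OF i_cos' i_0', symmetric]) (auto intro!: integral_cong simp: \<rho>1'_def algebra_simps)
    have rs': "(\<integral>x. \<rho>1' x * sin (S' x) \<partial>N') = (\<integral>x. \<rho>' x * (1 + sin (S' x)) * indicator B (V' m x) \<partial>N') - (\<integral>x. \<rho>' x * indicator B (V' m x) \<partial>N')"
      by (subst Bochner_Integration.integral_diff[OF i_sin' i_0', symmetric]) (auto intro!: integral_cong simp: \<rho>1'_def algebra_simps)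
    have b1: "\<bar>\<rho>1 x\<bar> \<le> c" for x unfolding \<rho>1_def using ab(3)[where f=0] by auto
    have b1': "\<bar>\<rho>1' x\<bar> \<le> c'" for x unfolding \<rho>1'_def using ab(4)[of 0] by auto
    have m1: "\<rho>1 \<in> borel_measurable N" "\<rho>1' \<in> borel_measurable N'" unfolding \<rho>1_def \<rho>1'_def by measurable
    show "(\<integral>x. complex_of_real (\<rho>1 x) * iexp (\<Sum>j<m. s j * V j x) \<partial>N) =
          (\<integral>x. complex_of_real (\<rho>1' x) * iexp (\<Sum>j<m. s j * V' j x) \<partial>N')"
      using iexp_split_integral[OF N m1(1) S b1] iexp_split_integral[OF N' m1(2) S' b1']
      unfolding S_def[symmetric] S'_def[symmetric] rc rs rc' rs' e0 e1 e2 by simp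
  qed
  have "(\<integral>x. \<rho> x * (\<Prod>j<Suc m. indicator (A j) (V j x)) \<partial>N) = (\<integral>x. \<rho>1 x * (\<Prod>j<m. indicator (A j) (V j x)) \<partial>N)"
    by (auto intro!: integral_cong simp: \<rho>1_def B_def mult_ac)
  also note IH
  also have "(\<integral>x. \<rho>1' x * (\<Prod>j<m. indicator (A j) (V' j x)) \<partial>N') = (\<integral>x. \<rho>' x * (\<Prod>j<Suc m. indicator (A j) (V' j x)) \<partial>N')"
    by (auto intro!: integral_cong simp: \<rho>1'_def B_def mult_ac)
  finally show ?case .
qed


lemma L2_meas[measurable_dest]: "f \<in> L2 \<Longrightarrow> f \<in> borel_measurable lborel"
  by (simp add: L2_def)

lemma L2_sq: "f \<in> L2 \<Longrightarrow> integrable lborel (\<lambda>x. (f x)\<^sup>2)"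
  by (simp add: L2_def)

lemma L2_mult_integrable:
  assumes "f \<in> L2" "g \<in> L2"
  shows "integrable lborel (\<lambda>x. f x * g x)"
proof (rule Bochner_Integration.integrable_bound)
  show "integrable lborel (\<lambda>x. (f x)\<^sup>2 + (g x)\<^sup>2)"
    using assms by (intro Bochner_Integration.integrable_add L2_sq)
  have [measurable]: "f \<in> borel_measurable borel" "g \<in> borel_measurable borel" using assms by (auto simp: L2_def)
  show "(\<lambda>x. f x * g x) \<in> borel_measurable lborel" by measurable
  show "AE x in lborel. norm (f x * g x) \<le> norm ((f x)\<^sup>2 + (g x)\<^sup>2)"
  proof (rule AE_I2)
    fix x
    have "0 \<le> (\<bar>f x\<bar> - \<bar>g x\<bar>)\<^sup>2" by simp
    then have "2 * (\<bar>f x\<bar> * \<bar>g x\<bar>) \<le> (f x)\<^sup>2 + (g x)\<^sup>2"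
      unfolding power2_eq_square by (simp add: algebra_simps abs_mult_self_eq)
    moreover have "0 \<le> \<bar>f x\<bar> * \<bar>g x\<bar>" by simp
    ultimately have "\<bar>f x\<bar> * \<bar>g x\<bar> \<le> (f x)\<^sup>2 + (g x)\<^sup>2" by linarith
    then show "norm (f x * g x) \<le> norm ((f x)\<^sup>2 + (g x)\<^sup>2)"
      by (simp add: abs_mult)
  qed
qed

lemma L2_lin:
  assumes "f \<in> L2" "g \<in> L2"
  shows "(\<lambda>x. a * f x + b * g x) \<in> L2"
proof -
  have [measurable]: "f \<in> borel_measurable borel" "g \<in> borel_measurable borel" using assms by (auto simp: L2_def)
  have m: "(\<lambda>x. a * f x + b * g x) \<in> borel_measurable lborel" by measurable
  have "integrable lborel (\<lambda>x. a\<^sup>2 * (f x)\<^sup>2 + b\<^sup>2 * (g x)\<^sup>2 + 2 * (a * b) * (f x * g x))"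
    using assms L2_mult_integrable[OF assms] by (intro Bochner_Integration.integrable_add integrable_mult_right L2_sq)
  moreover have "(\<lambda>x. (a * f x + b * g x)\<^sup>2) = (\<lambda>x. a\<^sup>2 * (f x)\<^sup>2 + b\<^sup>2 * (g x)\<^sup>2 + 2 * (a * b) * (f x * g x))"
    by (auto simp: power2_eq_square algebra_simps)
  ultimately show ?thesis using m by (simp add: L2_def)
qed

lemma L2_zero: "(\<lambda>x. 0) \<in> L2"
  by (simp add: L2_def)

lemma L2_sum:
  fixes n :: nat
  assumes "\<And>j. j < n \<Longrightarrow> f j \<in> L2"
  shows "(\<lambda>x. \<Sum>j<n. s j * f j x) \<in> L2"
  using assms
proof (induction n)
  case 0 then show ?case by (simp add: L2_zero)
next
  case (Suc n)
  have "(\<lambda>x. 1 * (\<Sum>j<n. s j * f j x) + s n * f n x) \<in> L2"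
    using Suc by (intro L2_lin) auto
  then show ?case by simp
qed

lemma ip_comm: "ip f g = ip g f"
  by (simp add: ip_def mult.commute)

lemma ip_lin_left:
  assumes "f \<in> L2" "g \<in> L2" "h \<in> L2"
  shows "ip (\<lambda>x. a * f x + b * g x) h = a * ip f h + b * ip g h"
  unfolding ip_def using L2_mult_integrable[OF assms(1,3)] L2_mult_integrable[OF assms(2,3)]
  by (simp add: algebra_simps)

lemma ip_lin_right:
  assumes "f \<in> L2" "g \<in> L2" "h \<in> L2"
  shows "ip h (\<lambda>x. a * f x + b * g x) = a * ip h f + b * ip h g"
  using ip_lin_left[OF assms] by (simp add: ip_comm)

lemma ip_sum_left:
  fixes n :: nat
  assumes "\<And>j. j < n \<Longrightarrow> f j \<in> L2" "h \<in> L2"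
  shows "ip (\<lambda>x. \<Sum>j<n. s j * f j x) h = (\<Sum>j<n. s j * ip (f j) h)"
  using assms
proof (induction n)
  case 0 then show ?case by (simp add: ip_def)
next
  case (Suc n)
  have "ip (\<lambda>x. 1 * (\<Sum>j<n. s j * f j x) + s n * f n x) h = 1 * ip (\<lambda>x. \<Sum>j<n. s j * f j x) h + s n * ip (f n) h"
    using Suc.prems by (intro ip_lin_left L2_sum) auto
  then show ?case using Suc by simp
qed

lemma ip_sq_nonneg: "ip f f \<ge> 0"
  unfolding ip_def by (rule integral_nonneg_AE) simp

lemma ip_zero_AE:
  assumes "f \<in> L2" "ip f f = 0"
  shows "AE x in lborel. f x = 0"
proof -
  have "AE x in lborel. (f x)\<^sup>2 = 0"
    using assms integral_nonneg_eq_0_iff_AE[of lborel "\<lambda>x. (f x)\<^sup>2"]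
    by (simp add: L2_def ip_def power2_eq_square)
  then show ?thesis by simp
qed

context
  fixes M :: "'a measure" and W :: "(real \<Rightarrow> real) \<Rightarrow> 'a \<Rightarrow> real"
  assumes iso: "isonormal M W"
begin

lemma iso_prob: "prob_space M"
  using iso by (simp add: isonormal_def)

lemma iso_meas[measurable_dest]: "f \<in> L2 \<Longrightarrow> W f \<in> borel_measurable M"
  using iso by (simp add: isonormal_def)

lemma iso_lin: "f \<in> L2 \<Longrightarrow> g \<in> L2 \<Longrightarrow> AE \<omega> in M. W (\<lambda>x. a * f x + b * g x) \<omega> = a * W f \<omega> + b * W g \<omega>"
  using iso by (simp add: isonormal_def)

lemma iso_char0: "f \<in> L2 \<Longrightarrow> (\<integral>\<omega>. iexp (W f \<omega>) \<partial>M) = exp (- complex_of_real (ip f f / 2))"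
  using iso by (simp add: isonormal_def)

lemma iso_sum:
  fixes n :: nat
  assumes "\<And>j. j < n \<Longrightarrow> f j \<in> L2"
  shows "AE \<omega> in M. W (\<lambda>x. \<Sum>j<n. s j * f j x) \<omega> = (\<Sum>j<n. s j * W (f j) \<omega>)"
  using assms
proof (induction n)
  case 0
  have "AE \<omega> in M. W (\<lambda>x. 0 * (\<lambda>x. 0) x + 0 * (\<lambda>x. 0) x) \<omega> = 0 * W (\<lambda>x. 0) \<omega> + 0 * W (\<lambda>x. 0) \<omega>"
    by (rule iso_lin) (auto simp: L2_zero)
  then show ?case by simp
next
  case (Suc n)
  have "AE \<omega> in M. W (\<lambda>x. 1 * (\<lambda>x. \<Sum>j<n. s j * f j x) x + s n * f n x) \<omega>
      = 1 * W (\<lambda>x. \<Sum>j<n. s j * f j x) \<omega> + s n * W (f n) \<omega>"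
    using Suc.prems by (intro iso_lin L2_sum) auto
  with Suc show ?case by (auto elim: AE_mp)
qed

lemma iso_ft_sum:
  fixes n :: nat
  assumes "\<And>j. j < n \<Longrightarrow> f j \<in> L2"
  shows "(\<integral>\<omega>. iexp (\<Sum>j<n. s j * W (f j) \<omega>) \<partial>M) = exp (- complex_of_real (ip (\<lambda>x. \<Sum>j<n. s j * f j x) (\<lambda>x. \<Sum>j<n. s j * f j x) / 2))"
proof -
  have "(\<integral>\<omega>. iexp (\<Sum>j<n. s j * W (f j) \<omega>) \<partial>M) = (\<integral>\<omega>. iexp (W (\<lambda>x. \<Sum>j<n. s j * f j x) \<omega>) \<partial>M)"
  proof (rule integral_cong_AE)
    have m: "W (f j) \<in> borel_measurable M" if "j < n" for j using that assms iso_meas by auto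
    have "(\<lambda>\<omega>. \<Sum>j<n. s j * W (f j) \<omega>) \<in> borel_measurable M"
      using m by (intro borel_measurable_sum borel_measurable_times) auto
    then show "(\<lambda>\<omega>. iexp (\<Sum>j<n. s j * W (f j) \<omega>)) \<in> borel_measurable M" by measurable
    have "W (\<lambda>x. \<Sum>j<n. s j * f j x) \<in> borel_measurable M"
      by (intro iso_meas L2_sum assms)
    then show "(\<lambda>\<omega>. iexp (W (\<lambda>x. \<Sum>j<n. s j * f j x) \<omega>)) \<in> borel_measurable M" by measurable
    have A: "AE \<omega> in M. W (\<lambda>x. \<Sum>j<n. s j * f j x) \<omega> = (\<Sum>j<n. s j * W (f j) \<omega>)"
      by (rule iso_sum) (rule assms)
    then show "AE \<omega> in M. iexp (\<Sum>j<n. s j * W (f j) \<omega>) = iexp (W (\<lambda>x. \<Sum>j<n. s j * f j x) \<omega>)"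
      by (rule AE_mp) (intro AE_I2 impI, simp)
  qed
  also have "\<dots> = exp (- complex_of_real (ip (\<lambda>x. \<Sum>j<n. s j * f j x) (\<lambda>x. \<Sum>j<n. s j * f j x) / 2))"
    by (rule iso_char0) (simp add: L2_sum assms)
  finally show ?thesis .
qed

end


lemma emeasure_box:
  fixes N :: "'b measure" and V :: "nat \<Rightarrow> 'b \<Rightarrow> real"
  assumes N: "prob_space N" and V: "\<And>j. V j \<in> borel_measurable N" and I: "finite I"
    and A: "\<And>j. j \<in> I \<Longrightarrow> A j \<in> sets borel"
  shows "emeasure (distr N (PiM I (\<lambda>_. borel)) (\<lambda>\<omega>. \<lambda>j\<in>I. V j \<omega>)) (Pi\<^sub>E I A)
     = ennreal (\<integral>\<omega>. (\<Prod>j\<in>I. indicator (A j) (V j \<omega>)) \<partial>N)"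
proof -
  interpret N: prob_space N by fact
  have mv[measurable]: "(\<lambda>\<omega>. \<lambda>j\<in>I. V j \<omega>) \<in> measurable N (PiM I (\<lambda>_. borel))"
    using V by (intro measurable_restrict) auto
  have PA: "Pi\<^sub>E I A \<in> sets (PiM I (\<lambda>_. borel))"
    using A by (intro sets_PiM_I_finite I) auto
  have "emeasure (distr N (PiM I (\<lambda>_. borel)) (\<lambda>\<omega>. \<lambda>j\<in>I. V j \<omega>)) (Pi\<^sub>E I A)
      = emeasure N ((\<lambda>\<omega>. \<lambda>j\<in>I. V j \<omega>) -` Pi\<^sub>E I A \<inter> space N)"
    by (rule emeasure_distr[OF mv PA])
  also have "\<dots> = (\<integral>\<^sup>+\<omega>. indicator ((\<lambda>\<omega>. \<lambda>j\<in>I. V j \<omega>) -` Pi\<^sub>E I A \<inter> space N) \<omega> \<partial>N)"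
    by (rule nn_integral_indicator[symmetric]) (use measurable_sets[OF mv PA] in simp)
  also have "\<dots> = (\<integral>\<^sup>+\<omega>. ennreal (\<Prod>j\<in>I. indicator (A j) (V j \<omega>)) \<partial>N)"
  proof (intro nn_integral_cong)
    fix \<omega> assume "\<omega> \<in> space N"
    show "indicator ((\<lambda>\<omega>. \<lambda>j\<in>I. V j \<omega>) -` Pi\<^sub>E I A \<inter> space N) \<omega> = ennreal (\<Prod>j\<in>I. indicator (A j) (V j \<omega>))"
    proof (cases "\<forall>j\<in>I. V j \<omega> \<in> A j")
      case True then show ?thesis using \<open>\<omega> \<in> space N\<close> by (auto simp: indicator_def PiE_iff)
    next
      case False
      then obtain j where "j \<in> I" "V j \<omega> \<notin> A j" by auto
      then have "(\<Prod>j\<in>I. indicator (A j) (V j \<omega>) :: real) = 0"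
        using I by (intro prod_zero) (auto intro!: bexI[of _ j])
      then show ?thesis using False by (auto simp: indicator_def PiE_iff)
    qed
  qed
  also have "\<dots> = ennreal (\<integral>\<omega>. (\<Prod>j\<in>I. indicator (A j) (V j \<omega>)) \<partial>N)"
  proof (rule nn_integral_eq_integral)
    have m: "(\<lambda>\<omega>. \<Prod>j\<in>I. indicator (A j) (V j \<omega>) :: real) \<in> borel_measurable N"
      using A V by (intro borel_measurable_prod borel_measurable_indicator') auto
    show "integrable N (\<lambda>\<omega>. \<Prod>j\<in>I. indicator (A j) (V j \<omega>) :: real)"
      by (rule N.integrable_const_bound[of _ 1]) (auto simp: m prod_le_1 abs_prod intro!: prod_le_1)
  qed (auto intro!: prod_nonneg)
  finally show ?thesis .
qed

context
  fixes M :: "'a measure" and W :: "(real \<Rightarrow> real) \<Rightarrow> 'a \<Rightarrow> real"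
  assumes iso: "isonormal M W"
begin

lemma ft_model:
  fixes d :: nat and g :: "nat \<Rightarrow> real \<Rightarrow> real" and u :: "real \<Rightarrow> real" and s :: "nat \<Rightarrow> real"
  assumes g: "\<And>k. k < d \<Longrightarrow> g k \<in> L2" and u: "u \<in> L2" and uu: "ip u u = 1"
    and gu: "\<And>k. k < d \<Longrightarrow> ip (g k) u = 0"
  shows "(\<integral>\<omega>. iexp ((\<Sum>j<d. s j * W (g j) \<omega>) + s d * W u \<omega>) \<partial>M)
       = (\<integral>z. iexp ((\<Sum>j<d. s j * W (g j) (fst z)) + s d * snd z) \<partial>(M \<Otimes>\<^sub>M std_normal_distribution))"
proof -
  interpret M: prob_space M by (rule iso_prob[OF iso])
  interpret S: prob_space std_normal_distribution using real_dist_normal_dist by (simp add: real_distribution_def)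
  interpret P: pair_prob_space M std_normal_distribution ..
  define h where "h j = (if j < d then g j else u)" for j
  have h: "h j \<in> L2" if "j < Suc d" for j using that g u by (auto simp: h_def)
  define G where "G = (\<lambda>x. \<Sum>j<d. s j * g j x)"
  define H where "H = (\<lambda>x. \<Sum>j<Suc d. s j * h j x)"
  have GL2: "G \<in> L2" unfolding G_def by (rule L2_sum) (rule g)
  have HG: "H = (\<lambda>x. 1 * G x + s d * u x)"
    by (auto simp: H_def G_def h_def intro!: sum.cong)
  have Gu: "ip G u = 0" unfolding G_def by (subst ip_sum_left) (auto simp: g u gu)
  have "ip H H = ip G G + (s d)\<^sup>2"
  proof -
    have "ip H H = 1 * ip G H + s d * ip u H"
      unfolding HG by (rule ip_lin_left[OF GL2 u]) (use L2_lin[OF GL2 u, of 1 "s d"] in simp)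
    also have "ip G H = 1 * ip G G + s d * ip G u"
      unfolding HG by (rule ip_lin_right[OF GL2 u GL2])
    also have "ip u H = 1 * ip u G + s d * ip u u"
      unfolding HG by (rule ip_lin_right[OF GL2 u u])
    finally show ?thesis using Gu uu by (simp add: ip_comm[of u G] power2_eq_square)
  qed
  have Wm: "W (g j) \<in> borel_measurable M" if "j < d" for j using g that iso_meas[OF iso] by auto
  have Sm[measurable]: "(\<lambda>\<omega>. \<Sum>j<d. s j * W (g j) \<omega>) \<in> borel_measurable M"
    using Wm by (intro borel_measurable_sum borel_measurable_times) auto
  have Wu[measurable]: "W u \<in> borel_measurable M" using iso_meas[OF iso u] .
  have "(\<integral>\<omega>. iexp ((\<Sum>j<d. s j * W (g j) \<omega>) + s d * W u \<omega>) \<partial>M) = (\<integral>\<omega>. iexp (\<Sum>j<Suc d. s j * W (h j) \<omega>) \<partial>M)"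
    by (auto simp: h_def intro!: Bochner_Integration.integral_cong arg_cong[where f=iexp] sum.cong)
  also have "\<dots> = exp (- complex_of_real (ip H H / 2))"
    unfolding H_def by (rule iso_ft_sum[OF iso h])
  also have "\<dots> = exp (- complex_of_real (ip G G / 2)) * exp (- complex_of_real ((s d)\<^sup>2 / 2))"
    by (simp add: \<open>ip H H = ip G G + (s d)\<^sup>2\<close> exp_add[symmetric] field_simps, simp add: diff_divide_distrib add_divide_distrib)
  finally have L: "(\<integral>\<omega>. iexp ((\<Sum>j<d. s j * W (g j) \<omega>) + s d * W u \<omega>) \<partial>M) =
      exp (- complex_of_real (ip G G / 2)) * exp (- complex_of_real ((s d)\<^sup>2 / 2))" .
  have int: "integrable (M \<Otimes>\<^sub>M std_normal_distribution) (\<lambda>z. iexp ((\<Sum>j<d. s j * W (g j) (fst z)) + s d * snd z))"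
  proof (rule P.integrable_const_bound[of _ 1])
    have "(\<lambda>z. \<Sum>j<d. s j * W (g j) (fst z)) \<in> borel_measurable (M \<Otimes>\<^sub>M std_normal_distribution)"
      using measurable_compose[OF measurable_fst Sm] by (simp add: comp_def)
    then have "(\<lambda>z. (\<Sum>j<d. s j * W (g j) (fst z)) + s d * snd z) \<in> borel_measurable (M \<Otimes>\<^sub>M std_normal_distribution)"
      by measurable
    then show "(\<lambda>z. iexp ((\<Sum>j<d. s j * W (g j) (fst z)) + s d * snd z)) \<in> borel_measurable (M \<Otimes>\<^sub>M std_normal_distribution)"
      by measurable
  qed auto
  have "(\<integral>z. iexp ((\<Sum>j<d. s j * W (g j) (fst z)) + s d * snd z) \<partial>(M \<Otimes>\<^sub>M std_normal_distribution))
      = (\<integral>\<omega>. \<integral>r. iexp ((\<Sum>j<d. s j * W (g j) \<omega>) + s d * r) \<partial>std_normal_distribution \<partial>M)"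
    using P.integral_fst'[OF int] by simp
  also have "\<dots> = (\<integral>\<omega>. iexp (\<Sum>j<d. s j * W (g j) \<omega>) * char std_normal_distribution (s d) \<partial>M)"
    unfolding char_def by (intro Bochner_Integration.integral_cong refl)
      (simp add: distrib_left exp_add integral_mult_right_zero)
  also have "\<dots> = (\<integral>\<omega>. iexp (\<Sum>j<d. s j * W (g j) \<omega>) \<partial>M) * char std_normal_distribution (s d)"
    by simp
  also have "(\<integral>\<omega>. iexp (\<Sum>j<d. s j * W (g j) \<omega>) \<partial>M) = exp (- complex_of_real (ip G G / 2))"
    unfolding G_def by (rule iso_ft_sum[OF iso g])
  also have "char std_normal_distribution (s d) = exp (- complex_of_real ((s d)\<^sup>2 / 2))"
    by (simp add: char_std_normal_distribution exp_of_real[symmetric])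
  finally show ?thesis using L by simp
qed

lemma indep_std:
  fixes d :: nat and g :: "nat \<Rightarrow> real \<Rightarrow> real" and u :: "real \<Rightarrow> real"
    and F :: "(nat \<Rightarrow> real) \<times> real \<Rightarrow> ennreal"
  assumes g: "\<And>k. k < d \<Longrightarrow> g k \<in> L2" and u: "u \<in> L2" and uu: "ip u u = 1"
    and gu: "\<And>k. k < d \<Longrightarrow> ip (g k) u = 0"
    and F[measurable]: "F \<in> borel_measurable (PiM {..<d} (\<lambda>_. borel) \<Otimes>\<^sub>M borel)"
  shows "(\<integral>\<^sup>+\<omega>. F (\<lambda>k\<in>{..<d}. W (g k) \<omega>, W u \<omega>) \<partial>M)
       = (\<integral>\<^sup>+\<omega>. \<integral>\<^sup>+r. F (\<lambda>k\<in>{..<d}. W (g k) \<omega>, r) \<partial>std_normal_distribution \<partial>M)"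
proof -
  interpret M: prob_space M by (rule iso_prob[OF iso])
  interpret S: prob_space std_normal_distribution using real_dist_normal_dist by (simp add: real_distribution_def)
  interpret P: pair_prob_space M std_normal_distribution ..
  let ?N = "M \<Otimes>\<^sub>M std_normal_distribution"
  define V where "V j = (if j < d then W (g j) else if j = d then W u else (\<lambda>_. 0))" for j
  define V' where "V' j = (if j < d then (\<lambda>z. W (g j) (fst z)) else if j = d then snd else (\<lambda>_. 0))" for j
  have Vm[measurable]: "V j \<in> borel_measurable M" for j
    using g u iso_meas[OF iso] by (auto simp: V_def)
  have V'm[measurable]: "V' j \<in> borel_measurable ?N" for j
  proof -
    have "(\<lambda>z. W (g j) (fst z)) \<in> borel_measurable ?N" if "j < d"
      using measurable_compose[OF measurable_fst[of M std_normal_distribution] iso_meas[OF iso g[OF that]]] by (simp add: comp_def)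
    then show ?thesis by (auto simp: V'_def)
  qed
  have rect: "(\<integral>x. (1::real) * (\<Prod>j<Suc d. indicator (A j) (V j x)) \<partial>M) = (\<integral>x. (1::real) * (\<Prod>j<Suc d. indicator (A j) (V' j x)) \<partial>?N)"
    if A: "\<And>j. j < Suc d \<Longrightarrow> A j \<in> sets borel" for A
  proof (rule uniq_multi[of M ?N V V', where \<rho>="\<lambda>_. 1" and \<rho>'="\<lambda>_. 1" and c=1 and c'=1 and m="Suc d"])
    fix s :: "nat \<Rightarrow> real"
    have e1: "(\<Sum>j<Suc d. s j * V j \<omega>) = (\<Sum>j<d. s j * W (g j) \<omega>) + s d * W u \<omega>" for \<omega>
      by (auto simp: V_def intro!: sum.cong)
    have e2: "(\<Sum>j<Suc d. s j * V' j z) = (\<Sum>j<d. s j * W (g j) (fst z)) + s d * snd z" for z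
      by (auto simp: V'_def intro!: sum.cong)
    show "(\<integral>x. complex_of_real 1 * iexp (\<Sum>j<Suc d. s j * V j x) \<partial>M) =
          (\<integral>x. complex_of_real 1 * iexp (\<Sum>j<Suc d. s j * V' j x) \<partial>?N)"
      unfolding e1 e2 using ft_model[OF g u uu gu] by simp
  qed (use A Vm V'm M.prob_space_axioms P.prob_space_axioms in auto)
  define I where "I = {..<Suc d}"
  have law: "distr M (PiM I (\<lambda>_. borel)) (\<lambda>\<omega>. \<lambda>j\<in>I. V j \<omega>) = distr ?N (PiM I (\<lambda>_. borel)) (\<lambda>z. \<lambda>j\<in>I. V' j z)"
  proof (rule measure_eqI_PiM_finite[where A="\<lambda>_. space (PiM I (\<lambda>_. borel))"])
    show "finite I" by (simp add: I_def)
    show "sets (distr M (PiM I (\<lambda>_. borel)) (\<lambda>\<omega>. \<lambda>j\<in>I. V j \<omega>)) = sets (PiM I (\<lambda>_. borel))" by simp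
    show "sets (distr ?N (PiM I (\<lambda>_. borel)) (\<lambda>z. \<lambda>j\<in>I. V' j z)) = sets (PiM I (\<lambda>_. borel))" by simp
    fix A :: "nat \<Rightarrow> real set" assume A: "\<And>i. i \<in> I \<Longrightarrow> A i \<in> sets borel"
    show "emeasure (distr M (PiM I (\<lambda>_. borel)) (\<lambda>\<omega>. \<lambda>j\<in>I. V j \<omega>)) (Pi\<^sub>E I A) =
          emeasure (distr ?N (PiM I (\<lambda>_. borel)) (\<lambda>z. \<lambda>j\<in>I. V' j z)) (Pi\<^sub>E I A)"
    proof -
      have fI: "finite I" by (simp add: I_def)
      have "(\<integral>x. (\<Prod>j\<in>I. indicator (A j) (V j x) :: real) \<partial>M) = (\<integral>x. (\<Prod>j\<in>I. indicator (A j) (V' j x) :: real) \<partial>?N)"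
        using rect[of A] A by (simp add: I_def)
      then show ?thesis
        by (simp add: emeasure_box[OF M.prob_space_axioms Vm fI A] emeasure_box[OF P.prob_space_axioms V'm fI A])
    qed
  next
    show "range (\<lambda>_. space (PiM I (\<lambda>_. borel))) \<subseteq> prod_algebra I (\<lambda>_. borel)"
      by (auto simp: space_PiM I_def intro!: prod_algebraI_finite)
  qed (auto simp: emeasure_distr)
  define F' where "F' z = F (restrict z {..<d}, z d)" for z :: "nat \<Rightarrow> real"
  have F'm: "F' \<in> borel_measurable (PiM I (\<lambda>_. borel))"
  proof -
    have "(\<lambda>z. (restrict z {..<d}, z d)) \<in> measurable (PiM I (\<lambda>_. borel)) (PiM {..<d} (\<lambda>_. borel) \<Otimes>\<^sub>M borel)"
      by (intro measurable_Pair measurable_restrict_subset measurable_component_singleton) (auto simp: I_def)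
    from measurable_compose[OF this F] show ?thesis by (simp add: F'_def[abs_def] comp_def)
  qed
  have mV: "(\<lambda>\<omega>. \<lambda>j\<in>I. V j \<omega>) \<in> measurable M (PiM I (\<lambda>_. borel))"
    by (rule measurable_restrict) simp
  have mV': "(\<lambda>z. \<lambda>j\<in>I. V' j z) \<in> measurable ?N (PiM I (\<lambda>_. borel))"
    by (rule measurable_restrict) simp
  have "(\<integral>\<^sup>+\<omega>. F (\<lambda>k\<in>{..<d}. W (g k) \<omega>, W u \<omega>) \<partial>M) = (\<integral>\<^sup>+\<omega>. F' (\<lambda>j\<in>I. V j \<omega>) \<partial>M)"
    by (intro nn_integral_cong) (auto simp: F'_def I_def V_def restrict_def intro!: arg_cong[where f=F])
  also have "\<dots> = (\<integral>\<^sup>+z. F' z \<partial>distr M (PiM I (\<lambda>_. borel)) (\<lambda>\<omega>. \<lambda>j\<in>I. V j \<omega>))"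
    by (rule nn_integral_distr[OF mV, symmetric]) (simp add: F'm)
  also have "\<dots> = (\<integral>\<^sup>+z. F' z \<partial>distr ?N (PiM I (\<lambda>_. borel)) (\<lambda>z. \<lambda>j\<in>I. V' j z))"
    by (simp add: law)
  also have "\<dots> = (\<integral>\<^sup>+z. F' (\<lambda>j\<in>I. V' j z) \<partial>?N)"
    by (rule nn_integral_distr[OF mV']) (simp add: F'm)
  also have "\<dots> = (\<integral>\<^sup>+z. F (\<lambda>k\<in>{..<d}. W (g k) (fst z), snd z) \<partial>?N)"
    by (intro nn_integral_cong) (auto simp: F'_def I_def V'_def restrict_def intro!: arg_cong[where f=F])
  also have "\<dots> = (\<integral>\<^sup>+\<omega>. \<integral>\<^sup>+r. F (\<lambda>k\<in>{..<d}. W (g k) \<omega>, r) \<partial>std_normal_distribution \<partial>M)"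
  proof (rule S.nn_integral_fst[symmetric, where f="\<lambda>z. F (\<lambda>k\<in>{..<d}. W (g k) (fst z), snd z)", simplified])
    have "(\<lambda>z. (\<lambda>k\<in>{..<d}. W (g k) (fst z), snd z)) \<in> measurable ?N (PiM {..<d} (\<lambda>_. borel) \<Otimes>\<^sub>M borel)"
    proof (intro measurable_Pair measurable_restrict)
      fix k assume "k \<in> {..<d}"
      then have "k < d" by simp
      then show "(\<lambda>z. W (g k) (fst z)) \<in> borel_measurable ?N"
        using measurable_compose[OF measurable_fst[of M std_normal_distribution] iso_meas[OF iso g[OF \<open>k < d\<close>]]] by (simp add: comp_def)
    qed simp
    from measurable_compose[OF this F] show "(\<lambda>z. F (\<lambda>k\<in>{..<d}. W (g k) (fst z), snd z)) \<in> borel_measurable ?N"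
      by (simp add: comp_def)
  qed
  finally show ?thesis .
qed

end


lemma L2_scale: "f \<in> L2 \<Longrightarrow> (\<lambda>x. a * f x) \<in> L2"
  using L2_lin[of f f a 0] by simp

lemma ip_scale_left: "ip (\<lambda>x. a * f x) g = a * ip f g"
  by (simp add: ip_def mult.assoc)

lemma ip_scale_right: "ip g (\<lambda>x. a * f x) = a * ip g f"
  by (simp add: ip_def mult.left_commute)

lemma ip_AE_zero:
  assumes "AE x in lborel. u x = 0"
  shows "ip f u = 0"
  unfolding ip_def using assms by (intro integral_eq_zero_AE) (auto elim: AE_mp)

lemma gram_solve:
  fixes n :: nat and f :: "nat \<Rightarrow> real \<Rightarrow> real"
  assumes L2: "\<And>j. j < n \<Longrightarrow> f j \<in> L2"
    and indep: "\<And>cq. AE x in lborel. (\<Sum>j<n. cq j * f j x) = 0 \<Longrightarrow> \<forall>j<n. cq j = 0"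
  shows "\<exists>cq. \<forall>k<n. ip (f k) (\<lambda>x. \<Sum>j<n. cq j * f j x) = b k"
  using assms
proof (induction n arbitrary: b)
  case 0 then show ?case by simp
next
  case (Suc n)
  have L2n: "\<And>j. j < n \<Longrightarrow> f j \<in> L2" using Suc.prems(1) by auto
  have fn: "f n \<in> L2" using Suc.prems(1) by auto
  have indn: "\<forall>j<n. cq j = 0" if "AE x in lborel. (\<Sum>j<n. cq j * f j x) = 0" for cq
  proof -
    have "AE x in lborel. (\<Sum>j<Suc n. (cq(n := 0)) j * f j x) = 0"
      using that by (rule AE_mp) (auto intro!: AE_I2 sum.cong)
    then have "\<forall>j<Suc n. (cq(n := 0)) j = 0" by (rule Suc.prems(2))
    then show ?thesis by (metis fun_upd_apply less_SucI less_irrefl_nat)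
  qed
  note IH = Suc.IH[OF L2n indn]
  obtain cq' where l': "\<forall>k<n. ip (f k) (\<lambda>x. \<Sum>j<n. cq' j * f j x) = ip (f k) (f n)"
    using IH[of "\<lambda>k. ip (f k) (f n)"] by blast
  define P where "P = (\<lambda>x. \<Sum>j<n. cq' j * f j x)"
  have PL2: "P \<in> L2" unfolding P_def by (rule L2_sum[OF L2n])
  define w where "w = (\<lambda>x. 1 * f n x + (-1) * P x)"
  have wL2: "w \<in> L2" unfolding w_def by (rule L2_lin[OF fn PL2])
  have fkw: "ip (f k) w = 0" if "k < n" for k
    unfolding w_def using ip_lin_right[OF fn PL2 L2n[OF that], of 1 "-1"] l' that by (simp add: P_def)
  have Pw: "ip P w = 0"
    unfolding P_def by (subst ip_sum_left[OF L2n wL2]) (auto simp: fkw)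
  have fnw: "ip (f n) w = ip w w"
  proof -
    have "ip w w = 1 * ip (f n) w + (-1) * ip P w"
      by (subst (1) w_def) (rule ip_lin_left[OF fn PL2 wL2])
    then show ?thesis using Pw by simp
  qed
  have wpos: "ip w w \<noteq> 0"
  proof
    assume "ip w w = 0"
    then have "AE x in lborel. w x = 0" by (rule ip_zero_AE[OF wL2])
    then have "AE x in lborel. (\<Sum>j<Suc n. (\<lambda>j. if j = n then 1 else - cq' j) j * f j x) = 0"
      by (rule AE_mp) (auto intro!: AE_I2 simp: w_def P_def sum_negf[symmetric] intro: sum.cong)
    then have "\<forall>j<Suc n. (\<lambda>j. if j = n then 1 else - cq' j) j = (0::real)" by (rule Suc.prems(2))
    then show False by auto
  qed
  obtain cq0 where l0: "\<forall>k<n. ip (f k) (\<lambda>x. \<Sum>j<n. cq0 j * f j x) = b k"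
    using IH[of b] by blast
  define U0 where "U0 = (\<lambda>x. \<Sum>j<n. cq0 j * f j x)"
  have U0L2: "U0 \<in> L2" unfolding U0_def by (rule L2_sum[OF L2n])
  define t where "t = (b n - ip (f n) U0) / ip (f n) w"
  define cq where "cq j = (if j < n then cq0 j - t * cq' j else t)" for j
  have U: "(\<lambda>x. \<Sum>j<Suc n. cq j * f j x) = (\<lambda>x. 1 * U0 x + t * w x)"
    by (auto simp: cq_def U0_def w_def P_def algebra_simps sum_subtractf sum_distrib_left sum_negf intro!: sum.cong)
  show ?case
  proof (intro exI allI impI)
    fix k assume k: "k < Suc n"
    have fk: "f k \<in> L2" using k Suc.prems(1) by auto
    have "ip (f k) (\<lambda>x. \<Sum>j<Suc n. cq j * f j x) = 1 * ip (f k) U0 + t * ip (f k) w"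
      unfolding U by (rule ip_lin_right[OF U0L2 wL2 fk])
    also have "\<dots> = b k"
    proof (cases "k < n")
      case True then show ?thesis using l0 fkw by (simp add: U0_def)
    next
      case False then have "k = n" using k by simp
      then show ?thesis using wpos fnw by (simp add: t_def)
    qed
    finally show "ip (f k) (\<lambda>x. \<Sum>j<Suc n. cq j * f j x) = b k" .
  qed
qed

lemma std_scale_ineq:
  fixes h :: "real \<Rightarrow> ennreal" and \<sigma> :: real
  assumes h[measurable]: "h \<in> borel_measurable borel" and \<sigma>: "1 \<le> \<sigma>"
  shows "(\<integral>\<^sup>+r. h r \<partial>std_normal_distribution) \<le> ennreal \<sigma> * (\<integral>\<^sup>+r. h (\<sigma> * r) \<partial>std_normal_distribution)"
proof -
  have phi: "std_normal_density (\<sigma> * x) \<le> std_normal_density x" for x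
  proof -
    have "x\<^sup>2 \<le> (\<sigma> * x)\<^sup>2"
    proof -
      have "1 \<le> \<sigma>\<^sup>2" using \<sigma> by (simp add: one_le_power)
      then have "1 * x\<^sup>2 \<le> \<sigma>\<^sup>2 * x\<^sup>2" by (intro mult_right_mono) auto
      then show ?thesis by (simp add: power_mult_distrib)
    qed
    then show ?thesis unfolding std_normal_density_def by (simp add: divide_right_mono)
  qed
  have "(\<integral>\<^sup>+r. h r \<partial>std_normal_distribution) = (\<integral>\<^sup>+x. ennreal (std_normal_density x) * h x \<partial>lborel)"
    by (subst nn_integral_density) auto
  also have "\<dots> = ennreal \<bar>\<sigma>\<bar> * (\<integral>\<^sup>+x. ennreal (std_normal_density (0 + \<sigma> * x)) * h (0 + \<sigma> * x) \<partial>lborel)"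
    using \<sigma> by (intro nn_integral_real_affine) auto
  also have "\<dots> \<le> ennreal \<sigma> * (\<integral>\<^sup>+x. ennreal (std_normal_density x) * h (\<sigma> * x) \<partial>lborel)"
    using \<sigma> by (auto intro!: mult_left_mono nn_integral_mono mult_right_mono ennreal_leI phi)
  also have "(\<integral>\<^sup>+x. ennreal (std_normal_density x) * h (\<sigma> * x) \<partial>lborel) = (\<integral>\<^sup>+r. h (\<sigma> * r) \<partial>std_normal_distribution)"
    by (subst nn_integral_density) auto
  finally show ?thesis .
qed


lemma perp_lin: "perp \<eta> f = (\<lambda>x. 1 * f x + (- ip f \<eta>) * \<eta> x)"
  by (simp add: perp_def)

lemma perp_L2: "f \<in> L2 \<Longrightarrow> \<eta> \<in> L2 \<Longrightarrow> perp \<eta> f \<in> L2"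
  unfolding perp_lin by (rule L2_lin)

lemma perp_orth: "f \<in> L2 \<Longrightarrow> \<eta> \<in> L2 \<Longrightarrow> ip \<eta> \<eta> = 1 \<Longrightarrow> ip (perp \<eta> f) \<eta> = 0"
  unfolding perp_lin by (subst ip_lin_left) auto

lemma meas_shift:
  fixes G :: "(nat \<Rightarrow> real) \<Rightarrow> ennreal" and c :: "nat \<Rightarrow> real"
  assumes G[measurable]: "G \<in> borel_measurable (PiM {..<d} (\<lambda>_. borel))"
  shows "(\<lambda>z. G (\<lambda>k\<in>{..<d}. fst z k + c k * snd z)) \<in> borel_measurable (PiM {..<d} (\<lambda>_. borel) \<Otimes>\<^sub>M borel)"
proof -
  have "(\<lambda>z. \<lambda>k\<in>{..<d}. fst z k + c k * snd z) \<in> measurable (PiM {..<d} (\<lambda>_. borel) \<Otimes>\<^sub>M borel) (PiM {..<d} (\<lambda>_. borel))"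
  proof (rule measurable_restrict)
    fix k assume k: "k \<in> {..<d}"
    have "(\<lambda>z. fst z k) \<in> borel_measurable (PiM {..<d} (\<lambda>_. borel) \<Otimes>\<^sub>M borel)"
      using measurable_compose[OF measurable_fst[of "PiM {..<d} (\<lambda>_. borel)" borel] measurable_component_singleton[OF k, of "\<lambda>_. borel"]] by (simp add: comp_def)
    then show "(\<lambda>z. fst z k + c k * snd z) \<in> borel_measurable (PiM {..<d} (\<lambda>_. borel) \<Otimes>\<^sub>M borel)"
      by measurable
  qed
  from measurable_compose[OF this G] show ?thesis by (simp add: comp_def)
qed

lemma core:
  fixes M :: "'a measure" and W :: "(real \<Rightarrow> real) \<Rightarrow> 'a \<Rightarrow> real"
    and \<eta> :: "real \<Rightarrow> real" and xs :: "(real \<Rightarrow> real) list"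
  assumes iso: "isonormal M W"
    and eta: "\<eta> \<in> L2" and xsL2: "set xs \<subseteq> L2"
    and li: "L2_lin_indep (\<eta> # xs)"
    and ee: "ip \<eta> \<eta> = 1"
  shows "\<exists>K\<ge>1. \<forall>G \<in> borel_measurable (PiM {..<length xs} (\<lambda>_. borel)).
     (\<integral>\<^sup>+\<omega>. G (\<lambda>k\<in>{..<length xs}. W (perp \<eta> (xs!k)) \<omega>) \<partial>M)
       \<le> ennreal K * (\<integral>\<^sup>+\<omega>. G (\<lambda>k\<in>{..<length xs}. W (xs!k) \<omega>) \<partial>M)"
proof -
  interpret M: prob_space M by (rule iso_prob[OF iso])
  define d where "d = length xs"
  define \<xi> where "\<xi> k = xs ! k" for k
  define a where "a k = ip (\<xi> k) \<eta>" for k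
  define p where "p k = perp \<eta> (\<xi> k)" for k
  have \<xi>L2: "\<xi> k \<in> L2" if "k < d" for k using that xsL2 by (auto simp: \<xi>_def d_def)
  have pL2: "p k \<in> L2" if "k < d" for k unfolding p_def using \<xi>L2[OF that] eta by (rule perp_L2)
  have p\<eta>: "ip (p k) \<eta> = 0" if "k < d" for k unfolding p_def using \<xi>L2[OF that] eta ee by (rule perp_orth)
  have pdef: "p k x = \<xi> k x - a k * \<eta> x" for k x by (simp add: p_def a_def perp_def)
  show ?thesis
  proof (cases "\<forall>k<d. a k = 0")
    case True
    have "perp \<eta> (xs!k) = xs!k" if "k < d" for k
      using True that by (auto simp: perp_def a_def \<xi>_def)
    then have "(\<lambda>k\<in>{..<length xs}. W (perp \<eta> (xs!k)) \<omega>) = (\<lambda>k\<in>{..<length xs}. W (xs!k) \<omega>)" for \<omega>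
      by (auto simp: d_def restrict_def)
    then show ?thesis by (intro exI[of _ 1]) auto
  next
    case False
    then obtain k0 where k0: "k0 < d" "a k0 \<noteq> 0" by auto
    have indep: "\<forall>j<d. cq j = 0" if "AE x in lborel. (\<Sum>j<d. cq j * p j x) = 0" for cq
    proof -
      define c where "c k = (if k = 0 then - (\<Sum>j<d. cq j * a j) else cq (k - 1))" for k
      have "(\<Sum>k<length (\<eta> # xs). c k * ((\<eta> # xs) ! k) x) = (\<Sum>j<d. cq j * p j x)" for x
      proof -
        have "(\<Sum>k<length (\<eta> # xs). c k * ((\<eta> # xs) ! k) x) = c 0 * \<eta> x + (\<Sum>j<d. c (Suc j) * (xs ! j) x)"
          by (simp only: length_Cons d_def[symmetric] sum.lessThan_Suc_shift nth_Cons_0 nth_Cons_Suc)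
        also have "\<dots> = (\<Sum>j<d. cq j * p j x)"
          by (simp add: c_def pdef \<xi>_def algebra_simps sum_subtractf sum_distrib_right sum_distrib_left)
        finally show ?thesis .
      qed
      then have "AE x in lborel. (\<Sum>k<length (\<eta> # xs). c k * ((\<eta> # xs) ! k) x) = 0"
        using that by simp
      then have "\<forall>k<length (\<eta> # xs). c k = 0" using li by (simp add: L2_lin_indep_def)
      then show ?thesis by (auto simp: c_def d_def)
    qed
    obtain cq where cq: "\<forall>k<d. ip (p k) (\<lambda>x. \<Sum>j<d. cq j * p j x) = a k"
      using gram_solve[of d p, OF pL2 indep] by blast
    define u where "u = (\<lambda>x. \<Sum>j<d. cq j * p j x)"
    have uL2: "u \<in> L2" unfolding u_def by (rule L2_sum[OF pL2])
    have u\<eta>: "ip u \<eta> = 0" unfolding u_def by (subst ip_sum_left[OF pL2 eta]) (auto simp: p\<eta>)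
    have pu: "ip (p k) u = a k" if "k < d" for k using cq that by (simp add: u_def)
    have uu0: "ip u u \<noteq> 0"
    proof
      assume "ip u u = 0"
      then have "AE x in lborel. u x = 0" by (rule ip_zero_AE[OF uL2])
      then have "ip (p k0) u = 0" by (rule ip_AE_zero)
      then show False using pu[OF k0(1)] k0(2) by simp
    qed
    have uupos: "ip u u > 0" using uu0 ip_sq_nonneg[of u] by simp
    define \<beta> where "\<beta> = sqrt (ip u u)"
    have \<beta>pos: "\<beta> > 0" using uupos by (simp add: \<beta>_def)
    have \<beta>sq: "\<beta> * \<beta> = ip u u" using uupos by (simp add: \<beta>_def)
    define e where "e = (\<lambda>x. (1 / \<beta>) * u x)"
    have eL2: "e \<in> L2" unfolding e_def by (rule L2_scale[OF uL2])
    have ee1: "ip e e = 1" unfolding e_def ip_scale_left ip_scale_right using \<beta>pos \<beta>sq uu0 by (simp add: field_simps)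
    have e\<eta>: "ip e \<eta> = 0" unfolding e_def ip_scale_left by (simp add: u\<eta>)
    have \<eta>e: "ip \<eta> e = 0" using e\<eta> by (simp add: ip_comm)
    define c where "c k = a k / \<beta>" for k
    have pe: "ip (p k) e = c k" if "k < d" for k unfolding e_def c_def ip_scale_right using pu[OF that] by simp
    define g where "g k = (\<lambda>x. 1 * p k x + (- c k) * e x)" for k
    have gL2: "g k \<in> L2" if "k < d" for k unfolding g_def by (rule L2_lin[OF pL2[OF that] eL2])
    have ge: "ip (g k) e = 0" if "k < d" for k
      unfolding g_def by (subst ip_lin_left[OF pL2[OF that] eL2 eL2]) (simp add: pe[OF that] ee1)
    have g\<eta>: "ip (g k) \<eta> = 0" if "k < d" for k
      unfolding g_def by (subst ip_lin_left[OF pL2[OF that] eL2 eta]) (simp add: p\<eta>[OF that] e\<eta>)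
    define \<sigma> where "\<sigma> = sqrt (1 + \<beta>\<^sup>2)"
    have \<sigma>1: "1 \<le> \<sigma>" by (simp add: \<sigma>_def)
    have \<sigma>sq: "\<sigma> * \<sigma> = 1 + \<beta>\<^sup>2" by (simp add: \<sigma>_def add_nonneg_nonneg)
    define e2 where "e2 = (\<lambda>x. (1 / \<sigma>) * e x + (\<beta> / \<sigma>) * \<eta> x)"
    have e2L2: "e2 \<in> L2" unfolding e2_def by (rule L2_lin[OF eL2 eta])
    have e2e2: "ip e2 e2 = 1"
    proof -
      have "ip e2 e2 = (1 / \<sigma>) * ip e e2 + (\<beta> / \<sigma>) * ip \<eta> e2"
        by (subst (1) e2_def) (rule ip_lin_left[OF eL2 eta e2L2])
      also have "ip e e2 = (1 / \<sigma>) * ip e e + (\<beta> / \<sigma>) * ip e \<eta>"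
        unfolding e2_def by (rule ip_lin_right[OF eL2 eta eL2])
      also have "ip \<eta> e2 = (1 / \<sigma>) * ip \<eta> e + (\<beta> / \<sigma>) * ip \<eta> \<eta>"
        unfolding e2_def by (rule ip_lin_right[OF eL2 eta eta])
      moreover have "1 + \<beta> * \<beta> \<noteq> 0" using zero_le_square[of \<beta>] by linarith
      ultimately show ?thesis using ee1 e\<eta> \<eta>e ee \<sigma>sq \<sigma>1
        by (simp add: field_simps power2_eq_square)
    qed
    have ge2: "ip (g k) e2 = 0" if "k < d" for k
      unfolding e2_def by (subst ip_lin_right[OF eL2 eta gL2[OF that]]) (simp add: ge[OF that] g\<eta>[OF that])
    have pid: "p k = (\<lambda>x. 1 * g k x + c k * e x)" for k
      by (auto simp: g_def)
    have \<xi>id: "\<xi> k = (\<lambda>x. 1 * g k x + (c k * \<sigma>) * e2 x)" for k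
    proof
      fix x
      have "c k * \<beta> = a k" using \<beta>pos by (simp add: c_def)
      then show "\<xi> k x = 1 * g k x + (c k * \<sigma>) * e2 x"
        using \<sigma>1 by (simp add: g_def e2_def pdef field_simps)
    qed
    have AE1: "AE \<omega> in M. \<forall>k\<in>{..<d}. W (p k) \<omega> = W (g k) \<omega> + c k * W e \<omega>"
    proof (rule AE_ball_countable')
      fix k assume "k \<in> {..<d}"
      then show "AE \<omega> in M. W (p k) \<omega> = W (g k) \<omega> + c k * W e \<omega>"
        using iso_lin[OF iso gL2 eL2, of k 1 "c k"] by (subst pid) simp
    qed simp
    have AE2: "AE \<omega> in M. \<forall>k\<in>{..<d}. W (\<xi> k) \<omega> = W (g k) \<omega> + (c k * \<sigma>) * W e2 \<omega>"
    proof (rule AE_ball_countable')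
      fix k assume "k \<in> {..<d}"
      then show "AE \<omega> in M. W (\<xi> k) \<omega> = W (g k) \<omega> + (c k * \<sigma>) * W e2 \<omega>"
        using iso_lin[OF iso gL2 e2L2, of k 1 "c k * \<sigma>"] by (subst \<xi>id) simp
    qed simp
    show ?thesis
    proof (intro exI[of _ \<sigma>] conjI \<sigma>1 ballI)
      fix G :: "(nat \<Rightarrow> real) \<Rightarrow> ennreal"
      assume G: "G \<in> borel_measurable (PiM {..<length xs} (\<lambda>_. borel))"
      then have Gd[measurable]: "G \<in> borel_measurable (PiM {..<d} (\<lambda>_. borel))" by (simp add: d_def)
      define F1 where "F1 z = G (\<lambda>k\<in>{..<d}. fst z k + c k * snd z)" for z
      define F2 where "F2 z = G (\<lambda>k\<in>{..<d}. fst z k + (c k * \<sigma>) * snd z)" for z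
      have F1m: "F1 \<in> borel_measurable (PiM {..<d} (\<lambda>_. borel) \<Otimes>\<^sub>M borel)"
        using meas_shift[OF Gd, of c] by (simp add: F1_def[abs_def])
      have F2m: "F2 \<in> borel_measurable (PiM {..<d} (\<lambda>_. borel) \<Otimes>\<^sub>M borel)"
        using meas_shift[OF Gd, of "\<lambda>k. c k * \<sigma>"] by (simp add: F2_def[abs_def])
      have "(\<integral>\<^sup>+\<omega>. G (\<lambda>k\<in>{..<length xs}. W (perp \<eta> (xs!k)) \<omega>) \<partial>M)
          = (\<integral>\<^sup>+\<omega>. F1 (\<lambda>k\<in>{..<d}. W (g k) \<omega>, W e \<omega>) \<partial>M)"
        using AE1
      proof (intro nn_integral_cong_AE, elim AE_mp, intro AE_I2 impI)
        fix \<omega> assume H: "\<forall>k\<in>{..<d}. W (p k) \<omega> = W (g k) \<omega> + c k * W e \<omega>"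
        show "G (\<lambda>k\<in>{..<length xs}. W (perp \<eta> (xs!k)) \<omega>) = F1 (\<lambda>k\<in>{..<d}. W (g k) \<omega>, W e \<omega>)"
          unfolding F1_def using H by (intro arg_cong[where f=G] ext) (auto simp: d_def p_def \<xi>_def)
      qed
      also have "\<dots> = (\<integral>\<^sup>+\<omega>. \<integral>\<^sup>+r. F1 (\<lambda>k\<in>{..<d}. W (g k) \<omega>, r) \<partial>std_normal_distribution \<partial>M)"
        by (rule indep_std[OF iso gL2 eL2 ee1 ge F1m])
      also have "\<dots> \<le> (\<integral>\<^sup>+\<omega>. ennreal \<sigma> * \<integral>\<^sup>+r. F1 (\<lambda>k\<in>{..<d}. W (g k) \<omega>, \<sigma> * r) \<partial>std_normal_distribution \<partial>M)"
      proof (rule nn_integral_mono)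
        fix \<omega>
        have "(\<lambda>r. F1 (\<lambda>k\<in>{..<d}. W (g k) \<omega>, r)) \<in> borel_measurable borel"
          using F1m by measurable
        then show "(\<integral>\<^sup>+r. F1 (\<lambda>k\<in>{..<d}. W (g k) \<omega>, r) \<partial>std_normal_distribution)
           \<le> ennreal \<sigma> * \<integral>\<^sup>+r. F1 (\<lambda>k\<in>{..<d}. W (g k) \<omega>, \<sigma> * r) \<partial>std_normal_distribution"
          by (rule std_scale_ineq[OF _ \<sigma>1])
      qed
      also have "\<dots> = ennreal \<sigma> * (\<integral>\<^sup>+\<omega>. \<integral>\<^sup>+r. F2 (\<lambda>k\<in>{..<d}. W (g k) \<omega>, r) \<partial>std_normal_distribution \<partial>M)"
      proof -
        have eqF: "F1 (v, \<sigma> * r) = F2 (v, r)" for v r by (simp add: F1_def F2_def mult.assoc)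
        interpret S: prob_space std_normal_distribution using real_dist_normal_dist by (simp add: real_distribution_def)
        have mg: "(\<lambda>z. (\<lambda>k\<in>{..<d}. W (g k) (fst z), snd z)) \<in> measurable (M \<Otimes>\<^sub>M std_normal_distribution) (PiM {..<d} (\<lambda>_. borel) \<Otimes>\<^sub>M borel)"
        proof (intro measurable_Pair measurable_restrict)
          fix k assume "k \<in> {..<d}"
          then have "k < d" by simp
          then show "(\<lambda>z. W (g k) (fst z)) \<in> borel_measurable (M \<Otimes>\<^sub>M std_normal_distribution)"
            using measurable_compose[OF measurable_fst[of M std_normal_distribution] iso_meas[OF iso gL2[OF \<open>k < d\<close>]]] by (simp add: comp_def)
        qed simp
        have "(\<lambda>z. F2 (\<lambda>k\<in>{..<d}. W (g k) (fst z), snd z)) \<in> borel_measurable (M \<Otimes>\<^sub>M std_normal_distribution)"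
          using measurable_compose[OF mg F2m] by (simp add: comp_def)
        from S.borel_measurable_nn_integral_fst[OF this]
        have mI: "(\<lambda>\<omega>. \<integral>\<^sup>+r. F2 (\<lambda>k\<in>{..<d}. W (g k) \<omega>, r) \<partial>std_normal_distribution) \<in> borel_measurable M" by simp
        show ?thesis by (simp only: eqF nn_integral_cmult[OF mI])
      qed
      also have "(\<integral>\<^sup>+\<omega>. \<integral>\<^sup>+r. F2 (\<lambda>k\<in>{..<d}. W (g k) \<omega>, r) \<partial>std_normal_distribution \<partial>M)
          = (\<integral>\<^sup>+\<omega>. F2 (\<lambda>k\<in>{..<d}. W (g k) \<omega>, W e2 \<omega>) \<partial>M)"
        by (rule indep_std[OF iso gL2 e2L2 e2e2 ge2 F2m, symmetric])
      also have "\<dots> = (\<integral>\<^sup>+\<omega>. G (\<lambda>k\<in>{..<length xs}. W (xs!k) \<omega>) \<partial>M)"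
        using AE2
      proof (intro nn_integral_cong_AE, elim AE_mp, intro AE_I2 impI)
        fix \<omega> assume H: "\<forall>k\<in>{..<d}. W (\<xi> k) \<omega> = W (g k) \<omega> + (c k * \<sigma>) * W e2 \<omega>"
        show "F2 (\<lambda>k\<in>{..<d}. W (g k) \<omega>, W e2 \<omega>) = G (\<lambda>k\<in>{..<length xs}. W (xs!k) \<omega>)"
          unfolding F2_def using H by (intro arg_cong[where f=G] ext) (auto simp: d_def \<xi>_def)
      qed
      finally show "(\<integral>\<^sup>+\<omega>. G (\<lambda>k\<in>{..<length xs}. W (perp \<eta> (xs!k)) \<omega>) \<partial>M)
         \<le> ennreal \<sigma> * (\<integral>\<^sup>+\<omega>. G (\<lambda>k\<in>{..<length xs}. W (xs!k) \<omega>) \<partial>M)" .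
    qed
  qed
qed


lemma sum_pow_le:
  fixes z :: "nat \<Rightarrow> real"
  assumes z: "\<And>k. k < n \<Longrightarrow> 0 \<le> z k"
  shows "(\<Sum>k<n. z k) ^ N \<le> (real n + 1) ^ N * (1 + (\<Sum>k<n. z k ^ N))"
proof (cases "n = 0")
  case True
  then show ?thesis by (cases N) auto
next
  case False
  define mx where "mx = Max (z ` {..<n})"
  have fin: "finite (z ` {..<n})" "z ` {..<n} \<noteq> {}" using False by auto
  obtain k0 where k0: "k0 < n" "z k0 = mx" using Max_in[OF fin] unfolding mx_def by auto
  have le: "z k \<le> mx" if "k < n" for k unfolding mx_def using fin that by (intro Max_ge) auto
  have "(\<Sum>k<n. z k) \<le> (\<Sum>k<n. mx)" by (intro sum_mono le) auto
  also have "\<dots> = real n * mx" by simp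
  finally have s: "(\<Sum>k<n. z k) \<le> real n * mx" .
  have "(\<Sum>k<n. z k) ^ N \<le> (real n * mx) ^ N"
    using s z by (intro power_mono) (auto intro: sum_nonneg)
  also have "\<dots> = real n ^ N * mx ^ N" by (simp add: power_mult_distrib)
  also have "\<dots> \<le> (real n + 1) ^ N * (1 + (\<Sum>k<n. z k ^ N))"
  proof (rule mult_mono)
    show "real n ^ N \<le> (real n + 1) ^ N" by (intro power_mono) auto
    have "mx ^ N = z k0 ^ N" using k0 by simp
    also have "\<dots> \<le> (\<Sum>k<n. z k ^ N)"
      using k0 z by (intro member_le_sum) auto
    finally show "mx ^ N \<le> 1 + (\<Sum>k<n. z k ^ N)" by simp
    show "0 \<le> mx ^ N" using k0 z by auto
  qed auto
  finally show ?thesis .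
qed

definition pA :: "((nat \<Rightarrow> nat) \<Rightarrow> complex) \<Rightarrow> real" where
  "pA c = (\<Sum>\<alpha>\<in>{\<alpha>. c \<alpha> \<noteq> 0}. cmod (c \<alpha>))"

definition pD :: "((nat \<Rightarrow> nat) \<Rightarrow> complex) \<Rightarrow> nat \<Rightarrow> nat" where
  "pD c d = (\<Sum>\<alpha>\<in>{\<alpha>. c \<alpha> \<noteq> 0}. \<Sum>k<d. \<alpha> k)"

lemma pA_nonneg: "0 \<le> pA c"
  unfolding pA_def by (intro sum_nonneg) auto

lemma poly_eval_bound:
  assumes c: "is_poly_coeffs c"
  shows "cmod (poly_eval c d x) \<le> pA c * (\<Prod>k<d. (1 + \<bar>x k\<bar>) ^ pD c d)"
proof -
  have fin: "finite {\<alpha>. c \<alpha> \<noteq> 0}" using c by (simp add: is_poly_coeffs_def)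
  have "cmod (poly_eval c d x) \<le> (\<Sum>\<alpha>\<in>{\<alpha>. c \<alpha> \<noteq> 0}. cmod (c \<alpha> * (\<Prod>k<d. complex_of_real (x k) ^ \<alpha> k)))"
    unfolding poly_eval_def by (rule norm_sum)
  also have "\<dots> \<le> (\<Sum>\<alpha>\<in>{\<alpha>. c \<alpha> \<noteq> 0}. cmod (c \<alpha>) * (\<Prod>k<d. (1 + \<bar>x k\<bar>) ^ pD c d))"
  proof (rule sum_mono)
    fix \<alpha> assume \<alpha>: "\<alpha> \<in> {\<alpha>. c \<alpha> \<noteq> 0}"
    have "cmod (\<Prod>k<d. complex_of_real (x k) ^ \<alpha> k) = (\<Prod>k<d. \<bar>x k\<bar> ^ \<alpha> k)"
      by (simp add: prod_norm[symmetric] norm_power)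
    also have "\<dots> \<le> (\<Prod>k<d. (1 + \<bar>x k\<bar>) ^ pD c d)"
    proof (rule prod_mono, intro conjI)
      fix k assume k: "k \<in> {..<d}"
      have ak: "\<alpha> k \<le> pD c d"
      proof -
        have "\<alpha> k \<le> (\<Sum>k<d. \<alpha> k)" using k by (intro member_le_sum) auto
        also have "\<dots> \<le> pD c d" unfolding pD_def using fin \<alpha> by (intro member_le_sum) auto
        finally show ?thesis .
      qed
      show "0 \<le> \<bar>x k\<bar> ^ \<alpha> k" by simp
      have "\<bar>x k\<bar> ^ \<alpha> k \<le> (1 + \<bar>x k\<bar>) ^ \<alpha> k" by (intro power_mono) auto
      also have "\<dots> \<le> (1 + \<bar>x k\<bar>) ^ pD c d" using ak by (intro power_increasing) auto
      finally show "\<bar>x k\<bar> ^ \<alpha> k \<le> (1 + \<bar>x k\<bar>) ^ pD c d" .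
    qed
    finally show "cmod (c \<alpha> * (\<Prod>k<d. complex_of_real (x k) ^ \<alpha> k)) \<le> cmod (c \<alpha>) * (\<Prod>k<d. (1 + \<bar>x k\<bar>) ^ pD c d)"
      by (simp add: norm_mult mult_left_mono)
  qed
  also have "\<dots> = pA c * (\<Prod>k<d. (1 + \<bar>x k\<bar>) ^ pD c d)"
    unfolding pA_def by (simp add: sum_distrib_right)
  finally show ?thesis .
qed

lemma poly_powr_bound:
  assumes c: "is_poly_coeffs c" and p: "0 < p"
  shows "cmod (poly_eval c d x) powr p \<le> (pA c + 1) ^ nat \<lceil>p\<rceil> * (real d + 1) ^ (pD c d * nat \<lceil>p\<rceil> * d)
     * (1 + (\<Sum>k<d. (1 + \<bar>x k\<bar>) ^ (pD c d * nat \<lceil>p\<rceil> * d)))"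
proof -
  define m where "m = nat \<lceil>p\<rceil>"
  define D where "D = pD c d"
  define y where "y k = 1 + \<bar>x k\<bar>" for k
  define Z where "Z = (pA c + 1) * (\<Prod>k<d. y k ^ D)"
  have y1: "1 \<le> y k" for k by (simp add: y_def)
  have P1: "1 \<le> (\<Prod>k<d. y k ^ D)" using y1 by (intro prod_ge_1) (auto intro: one_le_power)
  have Z1: "1 \<le> Z" unfolding Z_def using P1 pA_nonneg[of c]
    by (metis add_le_same_cancel2 le_add_same_cancel2 mult_mono' order_trans mult_1 zero_le_one)
  have zZ: "cmod (poly_eval c d x) \<le> Z"
  proof -
    have "cmod (poly_eval c d x) \<le> pA c * (\<Prod>k<d. y k ^ D)"
      using poly_eval_bound[OF c, of d x] by (simp add: y_def D_def)
    also have "\<dots> \<le> Z" unfolding Z_def using P1 by (intro mult_right_mono) auto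
    finally show ?thesis .
  qed
  have pm: "p \<le> real m" unfolding m_def by linarith
  have "cmod (poly_eval c d x) powr p \<le> Z powr p" using zZ p by (intro powr_mono2) auto
  also have "\<dots> \<le> Z powr real m" using Z1 pm by (intro powr_mono) auto
  also have "\<dots> = Z ^ m" using Z1 by (simp add: powr_realpow)
  also have "\<dots> = (pA c + 1) ^ m * (\<Prod>k<d. y k ^ (D * m))"
    unfolding Z_def by (simp add: power_mult_distrib prod_power_distrib power_mult)
  also have "(\<Prod>k<d. y k ^ (D * m)) \<le> (\<Prod>k<d. (\<Sum>j<d. y j) ^ (D * m))"
  proof (rule prod_mono, intro conjI)
    fix k assume k: "k \<in> {..<d}"
    show "0 \<le> y k ^ (D * m)" using y1[of k] by simp
    have "y k \<le> (\<Sum>j<d. y j)" using k y1 by (intro member_le_sum) (auto intro: order_trans[OF zero_le_one])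
    then show "y k ^ (D * m) \<le> (\<Sum>j<d. y j) ^ (D * m)" using y1[of k] by (intro power_mono) auto
  qed
  also have "(\<Prod>k<d. (\<Sum>j<d. y j) ^ (D * m)) = (\<Sum>j<d. y j) ^ (D * m * d)"
    by (simp add: power_mult)
  also have "\<dots> \<le> (real d + 1) ^ (D * m * d) * (1 + (\<Sum>k<d. y k ^ (D * m * d)))"
    using y1 by (intro sum_pow_le) (auto intro: order_trans[OF zero_le_one])
  finally have "cmod (poly_eval c d x) powr p \<le> (pA c + 1) ^ m * ((real d + 1) ^ (D * m * d) * (1 + (\<Sum>k<d. y k ^ (D * m * d))))"
    using pA_nonneg[of c] by (simp add: mult_left_mono)
  then show ?thesis by (simp add: m_def D_def y_def mult.assoc)
qed

lemma one_plus_pow: "0 \<le> (a::real) \<Longrightarrow> (1 + a) ^ N \<le> 2 ^ N * (1 + a ^ N)"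
proof -
  assume a: "0 \<le> a"
  have "(1 + a) ^ N \<le> (2 * max 1 a) ^ N" using a by (intro power_mono) auto
  also have "\<dots> = 2 ^ N * max 1 a ^ N" by (simp add: power_mult_distrib)
  also have "max 1 a ^ N \<le> 1 + a ^ N" using a by (cases "a \<le> 1") (auto simp: max_def)
  finally show ?thesis by (simp add: mult_left_mono)
qed

lemma integrable_std_abs_pow: "integrable std_normal_distribution (\<lambda>x. \<bar>x\<bar> ^ n)"
  by (subst integrable_density) (auto simp: normal_density_nonneg integrable_std_normal_moment_abs)

lemma poly_eval_meas[measurable]:
  "(\<lambda>z. poly_eval c d z) \<in> borel_measurable (PiM {..<d} (\<lambda>_. borel))"
  unfolding poly_eval_def by measurable

lemma poly_eval_cong: "(\<And>k. k < d \<Longrightarrow> x k = y k) \<Longrightarrow> poly_eval c d x = poly_eval c d y"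
  unfolding poly_eval_def by (intro sum.cong refl arg_cong2[where f="(*)"] prod.cong) auto

context
  fixes M :: "'a measure" and W :: "(real \<Rightarrow> real) \<Rightarrow> 'a \<Rightarrow> real"
  assumes iso: "isonormal M W"
begin

lemma law_unit:
  assumes u: "u \<in> L2" "ip u u = 1" and H[measurable]: "H \<in> borel_measurable borel"
  shows "(\<integral>\<^sup>+\<omega>. H (W u \<omega>) \<partial>M) = (\<integral>\<^sup>+r. H r \<partial>std_normal_distribution)"
proof -
  interpret M: prob_space M by (rule iso_prob[OF iso])
  have F: "(\<lambda>z. H (snd z)) \<in> borel_measurable (PiM {..<(0::nat)} (\<lambda>_. borel) \<Otimes>\<^sub>M (borel :: real measure))" by measurable
  have "(\<integral>\<^sup>+\<omega>. H (W u \<omega>) \<partial>M) = (\<integral>\<^sup>+\<omega>. \<integral>\<^sup>+r. H r \<partial>std_normal_distribution \<partial>M)"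
    using indep_std[OF iso _ u(1) u(2) _ F, where g="\<lambda>_. u"] by simp
  also have "\<dots> = (\<integral>\<^sup>+r. H r \<partial>std_normal_distribution)"
    by (simp add: M.emeasure_space_1)
  finally show ?thesis .
qed

lemma mom_unit:
  assumes u: "u \<in> L2" "ip u u = 1"
  shows "(\<integral>\<^sup>+\<omega>. ennreal (\<bar>W u \<omega>\<bar> ^ n) \<partial>M) < \<infinity>"
proof -
  have "(\<integral>\<^sup>+\<omega>. ennreal (\<bar>W u \<omega>\<bar> ^ n) \<partial>M) = (\<integral>\<^sup>+r. ennreal (\<bar>r\<bar> ^ n) \<partial>std_normal_distribution)"
    by (rule law_unit[OF u]) measurable
  also have "\<dots> = ennreal (\<integral>r. \<bar>r\<bar> ^ n \<partial>std_normal_distribution)"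
    by (rule nn_integral_eq_integral[OF integrable_std_abs_pow]) auto
  finally show ?thesis by simp
qed

lemma mom:
  assumes eta: "\<eta> \<in> L2" "ip \<eta> \<eta> = 1" and f: "f \<in> L2"
  shows "(\<integral>\<^sup>+\<omega>. ennreal (\<bar>W f \<omega>\<bar> ^ n) \<partial>M) < \<infinity>"
proof (cases "ip f f = 0")
  case False
  define v where "v = sqrt (ip f f)"
  have vpos: "v > 0" using False ip_sq_nonneg[of f] by (simp add: v_def)
  have vv: "v * v = ip f f" using ip_sq_nonneg[of f] by (simp add: v_def)
  define u where "u = (\<lambda>x. (1 / v) * f x)"
  have uL2: "u \<in> L2" unfolding u_def by (rule L2_scale[OF f])
  have uu: "ip u u = 1" unfolding u_def ip_scale_left ip_scale_right using vv vpos False by (simp add: field_simps)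
  have fu: "f = (\<lambda>x. v * u x + 0 * u x)" using vpos by (auto simp: u_def)
  have "AE \<omega> in M. W f \<omega> = v * W u \<omega> + 0 * W u \<omega>"
    using iso_lin[OF iso uL2 uL2, of v 0] by (subst fu) simp
  then have "(\<integral>\<^sup>+\<omega>. ennreal (\<bar>W f \<omega>\<bar> ^ n) \<partial>M) = (\<integral>\<^sup>+\<omega>. ennreal (v ^ n) * ennreal (\<bar>W u \<omega>\<bar> ^ n) \<partial>M)"
    using vpos by (intro nn_integral_cong_AE) (auto elim!: AE_mp simp: abs_mult power_mult_distrib ennreal_mult)
  also have "\<dots> = ennreal (v ^ n) * (\<integral>\<^sup>+\<omega>. ennreal (\<bar>W u \<omega>\<bar> ^ n) \<partial>M)"
    using iso_meas[OF iso uL2] by (intro nn_integral_cmult) measurable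
  also have "\<dots> < \<infinity>" using mom_unit[OF uL2 uu, of n] by (simp add: ennreal_mult_less_top)
  finally show ?thesis .
next
  case True
  have f0: "AE x in lborel. f x = 0" by (rule ip_zero_AE[OF f True])
  have f\<eta>: "ip f \<eta> = 0" using ip_AE_zero[OF f0, of \<eta>] by (simp add: ip_comm)
  define h where "h = (\<lambda>x. 1 * f x + 1 * \<eta> x)"
  have hL2: "h \<in> L2" unfolding h_def by (rule L2_lin[OF f eta(1)])
  have hh: "ip h h = 1"
  proof -
    have "ip h h = 1 * ip f h + 1 * ip \<eta> h" by (subst (1) h_def) (rule ip_lin_left[OF f eta(1) hL2])
    also have "ip f h = 1 * ip f f + 1 * ip f \<eta>" unfolding h_def by (rule ip_lin_right[OF f eta(1) f])
    also have "ip \<eta> h = 1 * ip \<eta> f + 1 * ip \<eta> \<eta>" unfolding h_def by (rule ip_lin_right[OF f eta(1) eta(1)])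
    finally show ?thesis using True f\<eta> eta(2) by (simp add: ip_comm[of \<eta> f])
  qed
  have fh: "f = (\<lambda>x. 1 * h x + (-1) * \<eta> x)" by (auto simp: h_def)
  have "AE \<omega> in M. W f \<omega> = 1 * W h \<omega> + (-1) * W \<eta> \<omega>"
    using iso_lin[OF iso hL2 eta(1), of 1 "-1"] by (subst fh) simp
  then have "(\<integral>\<^sup>+\<omega>. ennreal (\<bar>W f \<omega>\<bar> ^ n) \<partial>M) \<le> (\<integral>\<^sup>+\<omega>. ennreal (2 ^ n) * (ennreal (\<bar>W h \<omega>\<bar> ^ n) + ennreal (\<bar>W \<eta> \<omega>\<bar> ^ n)) \<partial>M)"
  proof (intro nn_integral_mono_AE, elim AE_mp, intro AE_I2 impI)
    fix \<omega> assume e: "W f \<omega> = 1 * W h \<omega> + (-1) * W \<eta> \<omega>"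
    have "\<bar>W f \<omega>\<bar> ^ n \<le> (\<bar>W h \<omega>\<bar> + \<bar>W \<eta> \<omega>\<bar>) ^ n" using e by (intro power_mono) auto
    also have "\<dots> \<le> (2 * max \<bar>W h \<omega>\<bar> \<bar>W \<eta> \<omega>\<bar>) ^ n" by (intro power_mono) auto
    also have "\<dots> = 2 ^ n * max \<bar>W h \<omega>\<bar> \<bar>W \<eta> \<omega>\<bar> ^ n" by (simp add: power_mult_distrib)
    also have "\<dots> \<le> 2 ^ n * (\<bar>W h \<omega>\<bar> ^ n + \<bar>W \<eta> \<omega>\<bar> ^ n)"
      by (intro mult_left_mono) (auto simp: max_def)
    finally show "ennreal (\<bar>W f \<omega>\<bar> ^ n) \<le> ennreal (2 ^ n) * (ennreal (\<bar>W h \<omega>\<bar> ^ n) + ennreal (\<bar>W \<eta> \<omega>\<bar> ^ n))"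
      by (simp add: ennreal_mult[symmetric] ennreal_plus[symmetric] del: ennreal_plus)
  qed
  also have "\<dots> = ennreal (2 ^ n) * ((\<integral>\<^sup>+\<omega>. ennreal (\<bar>W h \<omega>\<bar> ^ n) \<partial>M) + (\<integral>\<^sup>+\<omega>. ennreal (\<bar>W \<eta> \<omega>\<bar> ^ n) \<partial>M))"
  proof -
    have [measurable]: "W h \<in> borel_measurable M" "W \<eta> \<in> borel_measurable M"
      using iso_meas[OF iso hL2] iso_meas[OF iso eta(1)] by auto
    show ?thesis by (subst nn_integral_cmult) (measurable, simp add: nn_integral_add)
  qed
  also have "\<dots> < \<infinity>" using mom_unit[OF hL2 hh, of n] mom_unit[OF eta, of n]
    by (simp add: ennreal_mult_less_top)
  finally show ?thesis .
qed

lemma poly_fun_restrict: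
  "poly_fun W c ys \<omega> = poly_eval c (length ys) (\<lambda>k\<in>{..<length ys}. W (ys!k) \<omega>)"
  unfolding poly_fun_def by (rule poly_eval_cong) auto

lemma vec_meas:
  assumes "set ys \<subseteq> L2"
  shows "(\<lambda>\<omega>. \<lambda>k\<in>{..<length ys}. W (ys!k) \<omega>) \<in> measurable M (PiM {..<length ys} (\<lambda>_. borel))"
proof (rule measurable_restrict)
  fix k assume "k \<in> {..<length ys}"
  then have "ys ! k \<in> L2" using assms by (auto dest: nth_mem)
  then show "W (ys!k) \<in> borel_measurable M" by (rule iso_meas[OF iso])
qed

lemma poly_fun_meas:
  assumes "set ys \<subseteq> L2"
  shows "poly_fun W c ys \<in> borel_measurable M"
proof -
  have "(\<lambda>\<omega>. poly_eval c (length ys) (\<lambda>k\<in>{..<length ys}. W (ys!k) \<omega>)) \<in> borel_measurable M"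
    using measurable_compose[OF vec_meas[OF assms] poly_eval_meas] by (simp add: comp_def)
  then show ?thesis by (simp add: poly_fun_restrict[abs_def])
qed

lemma int_abs_pow:
  assumes eta: "\<eta> \<in> L2" "ip \<eta> \<eta> = 1" and f: "f \<in> L2"
  shows "integrable M (\<lambda>\<omega>. (1 + \<bar>W f \<omega>\<bar>) ^ N)"
proof -
  interpret M: prob_space M by (rule iso_prob[OF iso])
  have [measurable]: "W f \<in> borel_measurable M" by (rule iso_meas[OF iso f])
  have i1: "integrable M (\<lambda>\<omega>. \<bar>W f \<omega>\<bar> ^ N)"
    by (rule integrableI_bounded) (use mom[OF eta f, of N] in auto)
  have "integrable M (\<lambda>\<omega>. 2 ^ N * (1 + \<bar>W f \<omega>\<bar> ^ N))"
    using i1 by (intro integrable_mult_right Bochner_Integration.integrable_add) auto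
  then show ?thesis
    by (rule Bochner_Integration.integrable_bound) (auto intro!: AE_I2 one_plus_pow)
qed

lemma poly_in_Lp:
  assumes eta: "\<eta> \<in> L2" "ip \<eta> \<eta> = 1" and ys: "set ys \<subseteq> L2" and c: "is_poly_coeffs c" and p: "0 < p"
  shows "in_Lp M p (poly_fun W c ys)"
proof -
  interpret M: prob_space M by (rule iso_prob[OF iso])
  define d where "d = length ys"
  define N where "N = pD c d * nat \<lceil>p\<rceil> * d"
  define B where "B = (pA c + 1) ^ nat \<lceil>p\<rceil> * (real d + 1) ^ N"
  have ysk: "ys ! k \<in> L2" if "k < d" for k using ys that by (auto simp: d_def dest: nth_mem)
  have pm[measurable]: "poly_fun W c ys \<in> borel_measurable M" by (rule poly_fun_meas[OF ys])
  have ib: "integrable M (\<lambda>\<omega>. B * (1 + (\<Sum>k<d. (1 + \<bar>W (ys!k) \<omega>\<bar>) ^ N)))"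
  proof -
    have "integrable M (\<lambda>\<omega>. (\<Sum>k<d. (1 + \<bar>W (ys!k) \<omega>\<bar>) ^ N))"
      by (rule Bochner_Integration.integrable_sum) (auto intro: int_abs_pow[OF eta ysk])
    then show ?thesis by (intro integrable_mult_right Bochner_Integration.integrable_add) auto
  qed
  have "integrable M (\<lambda>\<omega>. cmod (poly_fun W c ys \<omega>) powr p)"
  proof (rule Bochner_Integration.integrable_bound[OF ib])
    show "(\<lambda>\<omega>. cmod (poly_fun W c ys \<omega>) powr p) \<in> borel_measurable M" by measurable
    show "AE \<omega> in M. norm (cmod (poly_fun W c ys \<omega>) powr p) \<le> norm (B * (1 + (\<Sum>k<d. (1 + \<bar>W (ys!k) \<omega>\<bar>) ^ N)))"
    proof (rule AE_I2)
      fix \<omega>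
      have "cmod (poly_fun W c ys \<omega>) powr p \<le> B * (1 + (\<Sum>k<d. (1 + \<bar>W (ys!k) \<omega>\<bar>) ^ N))"
        using poly_powr_bound[OF c p, of d "\<lambda>k. W (ys!k) \<omega>"]
        by (simp add: poly_fun_def d_def[symmetric] N_def B_def mult.assoc)
      moreover have "0 \<le> B * (1 + (\<Sum>k<d. (1 + \<bar>W (ys!k) \<omega>\<bar>) ^ N))"
        unfolding B_def using pA_nonneg[of c] by (intro mult_nonneg_nonneg add_nonneg_nonneg sum_nonneg) auto
      ultimately show "norm (cmod (poly_fun W c ys \<omega>) powr p) \<le> norm (B * (1 + (\<Sum>k<d. (1 + \<bar>W (ys!k) \<omega>\<bar>) ^ N)))"
        by simp
    qed
  qed
  then show ?thesis using pm by (simp add: in_Lp_def)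
qed

end


lemma powr_sum_le:
  fixes x y :: complex and p :: real
  assumes p: "0 \<le> p"
  shows "cmod (x + y) powr p \<le> 2 powr p * (cmod x powr p + cmod y powr p)"
proof -
  have "cmod (x + y) \<le> 2 * max (cmod x) (cmod y)"
    using norm_triangle_ineq[of x y] by linarith
  then have "cmod (x + y) powr p \<le> (2 * max (cmod x) (cmod y)) powr p"
    using p by (intro powr_mono2) auto
  also have "\<dots> = 2 powr p * max (cmod x) (cmod y) powr p" by (simp add: powr_mult)
  also have "max (cmod x) (cmod y) powr p \<le> cmod x powr p + cmod y powr p"
    by (cases "cmod x \<le> cmod y") (auto simp: max_def)
  finally show ?thesis by (simp add: mult_left_mono)
qed

lemma Lp_norm_nonneg: "0 \<le> Lp_norm M p f"
  by (simp add: Lp_norm_def)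

lemma LINT_powr_nonneg: "0 \<le> (LINT \<omega>|M. cmod (f \<omega>) powr p)"
  by (intro integral_nonneg_AE) auto

lemma Lp_norm_powr:
  assumes "0 < p"
  shows "Lp_norm M p f powr p = (LINT \<omega>|M. cmod (f \<omega>) powr p)"
  using assms LINT_powr_nonneg[of M f p] by (simp add: Lp_norm_def powr_powr)

lemma Lp_tendsto_iff:
  assumes p: "0 < p"
  shows "(\<lambda>n. Lp_norm M p (h n)) \<longlonglongrightarrow> 0 \<longleftrightarrow> (\<lambda>n. LINT \<omega>|M. cmod (h n \<omega>) powr p) \<longlonglongrightarrow> 0"
proof
  assume "(\<lambda>n. Lp_norm M p (h n)) \<longlonglongrightarrow> 0"
  then have "(\<lambda>n. Lp_norm M p (h n) powr p) \<longlonglongrightarrow> 0"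
    using p by (intro tendsto_zero_powrI[where b=p]) (auto simp: Lp_norm_nonneg)
  then show "(\<lambda>n. LINT \<omega>|M. cmod (h n \<omega>) powr p) \<longlonglongrightarrow> 0"
    using p by (simp add: Lp_norm_powr)
next
  assume "(\<lambda>n. LINT \<omega>|M. cmod (h n \<omega>) powr p) \<longlonglongrightarrow> 0"
  then have "(\<lambda>n. (LINT \<omega>|M. cmod (h n \<omega>) powr p) powr (1 / p)) \<longlonglongrightarrow> 0"
    using p by (intro tendsto_zero_powrI[where b="1/p"]) (auto simp: LINT_powr_nonneg)
  then show "(\<lambda>n. Lp_norm M p (h n)) \<longlonglongrightarrow> 0" by (simp add: Lp_norm_def)
qed

lemma in_Lp_lin:
  assumes f: "in_Lp M p f" and g: "in_Lp M p g" and p: "0 < p"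
  shows "in_Lp M p (\<lambda>\<omega>. a * f \<omega> + b * g \<omega>)"
    and "(LINT \<omega>|M. cmod (a * f \<omega> + b * g \<omega>) powr p)
        \<le> 2 powr p * (cmod a powr p * (LINT \<omega>|M. cmod (f \<omega>) powr p) + cmod b powr p * (LINT \<omega>|M. cmod (g \<omega>) powr p))"
proof -
  have [measurable]: "f \<in> borel_measurable M" "g \<in> borel_measurable M" using f g by (auto simp: in_Lp_def)
  have i: "integrable M (\<lambda>\<omega>. 2 powr p * (cmod a powr p * cmod (f \<omega>) powr p + cmod b powr p * cmod (g \<omega>) powr p))"
    using f g by (intro integrable_mult_right Bochner_Integration.integrable_add) (auto simp: in_Lp_def)
  have b: "cmod (a * f \<omega> + b * g \<omega>) powr p \<le> 2 powr p * (cmod a powr p * cmod (f \<omega>) powr p + cmod b powr p * cmod (g \<omega>) powr p)" for \<omega>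
    using powr_sum_le[of p "a * f \<omega>" "b * g \<omega>"] p by (simp add: norm_mult powr_mult)
  have i2: "integrable M (\<lambda>\<omega>. cmod (a * f \<omega> + b * g \<omega>) powr p)"
    by (rule Bochner_Integration.integrable_bound[OF i]) (auto intro!: AE_I2 order_trans[OF b] simp: abs_of_nonneg)
  then show "in_Lp M p (\<lambda>\<omega>. a * f \<omega> + b * g \<omega>)" by (simp add: in_Lp_def)
  have "(LINT \<omega>|M. cmod (a * f \<omega> + b * g \<omega>) powr p) \<le> (LINT \<omega>|M. 2 powr p * (cmod a powr p * cmod (f \<omega>) powr p + cmod b powr p * cmod (g \<omega>) powr p))"
    by (rule integral_mono[OF i2 i b])
  also have "\<dots> = 2 powr p * (cmod a powr p * (LINT \<omega>|M. cmod (f \<omega>) powr p) + cmod b powr p * (LINT \<omega>|M. cmod (g \<omega>) powr p))"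
    using f g by (simp add: in_Lp_def)
  finally show "(LINT \<omega>|M. cmod (a * f \<omega> + b * g \<omega>) powr p)
        \<le> 2 powr p * (cmod a powr p * (LINT \<omega>|M. cmod (f \<omega>) powr p) + cmod b powr p * (LINT \<omega>|M. cmod (g \<omega>) powr p))" .
qed

lemma Lp_from_nn:
  assumes u: "in_Lp M p u" and v: "in_Lp M p v" and K: "1 \<le> K" and p: "1 \<le> p"
    and le: "(\<integral>\<^sup>+\<omega>. ennreal (cmod (u \<omega>) powr p) \<partial>M) \<le> ennreal K * (\<integral>\<^sup>+\<omega>. ennreal (cmod (v \<omega>) powr p) \<partial>M)"
  shows "Lp_norm M p u \<le> K * Lp_norm M p v"
proof -
  have Iu: "(\<integral>\<^sup>+\<omega>. ennreal (cmod (u \<omega>) powr p) \<partial>M) = ennreal (LINT \<omega>|M. cmod (u \<omega>) powr p)"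
    using u by (intro nn_integral_eq_integral) (auto simp: in_Lp_def)
  have Iv: "(\<integral>\<^sup>+\<omega>. ennreal (cmod (v \<omega>) powr p) \<partial>M) = ennreal (LINT \<omega>|M. cmod (v \<omega>) powr p)"
    using v by (intro nn_integral_eq_integral) (auto simp: in_Lp_def)
  have "(LINT \<omega>|M. cmod (u \<omega>) powr p) \<le> K * (LINT \<omega>|M. cmod (v \<omega>) powr p)"
    using le K unfolding Iu Iv by (simp add: ennreal_mult[symmetric] LINT_powr_nonneg ennreal_le_iff)
  then have "Lp_norm M p u \<le> (K * (LINT \<omega>|M. cmod (v \<omega>) powr p)) powr (1 / p)"
    unfolding Lp_norm_def using p by (intro powr_mono2) (auto simp: LINT_powr_nonneg)
  also have "\<dots> = K powr (1 / p) * Lp_norm M p v"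
    using K by (simp add: Lp_norm_def powr_mult LINT_powr_nonneg)
  also have "\<dots> \<le> K * Lp_norm M p v"
  proof (rule mult_right_mono)
    have "K powr (1 / p) \<le> K powr 1" using K p by (intro powr_mono) auto
    then show "K powr (1 / p) \<le> K" using K by simp
  qed (simp add: Lp_norm_nonneg)
  finally show ?thesis .
qed

lemma poly_eval_superset:
  assumes "finite S" "{\<alpha>. c \<alpha> \<noteq> 0} \<subseteq> S"
  shows "poly_eval c d x = (\<Sum>\<alpha>\<in>S. c \<alpha> * (\<Prod>k<d. complex_of_real (x k) ^ \<alpha> k))"
  unfolding poly_eval_def by (rule sum.mono_neutral_left) (use assms in auto)

lemma poly_lin:
  assumes c1: "is_poly_coeffs c1" and c2: "is_poly_coeffs c2"
  shows "is_poly_coeffs (\<lambda>\<alpha>. a * c1 \<alpha> + b * c2 \<alpha>)"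
    and "poly_fun W (\<lambda>\<alpha>. a * c1 \<alpha> + b * c2 \<alpha>) ys \<omega> = a * poly_fun W c1 ys \<omega> + b * poly_fun W c2 ys \<omega>"
proof -
  define S where "S = {\<alpha>. c1 \<alpha> \<noteq> 0} \<union> {\<alpha>. c2 \<alpha> \<noteq> 0}"
  have S: "finite S" using c1 c2 by (simp add: S_def is_poly_coeffs_def)
  have sub: "{\<alpha>. a * c1 \<alpha> + b * c2 \<alpha> \<noteq> 0} \<subseteq> S" by (auto simp: S_def)
  show "is_poly_coeffs (\<lambda>\<alpha>. a * c1 \<alpha> + b * c2 \<alpha>)" unfolding is_poly_coeffs_def
    using finite_subset[OF sub S] .
  show "poly_fun W (\<lambda>\<alpha>. a * c1 \<alpha> + b * c2 \<alpha>) ys \<omega> = a * poly_fun W c1 ys \<omega> + b * poly_fun W c2 ys \<omega>"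
    unfolding poly_fun_def
    by (simp add: poly_eval_superset[OF S sub] poly_eval_superset[OF S, of c1] poly_eval_superset[OF S, of c2]
        S_def sum.distrib sum_distrib_left algebra_simps subset_iff)
qed


context
  fixes M :: "'a measure" and W :: "(real \<Rightarrow> real) \<Rightarrow> 'a \<Rightarrow> real"
    and \<eta> :: "real \<Rightarrow> real" and xs :: "(real \<Rightarrow> real) list"
  assumes iso: "isonormal M W"
    and eta: "\<eta> \<in> L2" and xsL2: "set xs \<subseteq> L2"
    and ee: "ip \<eta> \<eta> = 1"
begin

lemma Cl_poly:
  assumes c: "is_poly_coeffs c" and p: "0 < p"
  shows "poly_fun W c xs \<in> Lp_closure_poly M p W xs"
proof -
  have "Lp_norm M p (\<lambda>\<omega>. poly_fun W c xs \<omega> - poly_fun W c xs \<omega>) = 0"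
    using p by (simp add: Lp_norm_def)
  then show ?thesis
    using poly_in_Lp[OF iso eta ee xsL2 c p] c
    by (auto simp: Lp_closure_poly_def intro!: exI[of _ "\<lambda>_. c"])
qed

lemma Cl_lin:
  assumes f: "f \<in> Lp_closure_poly M p W xs" and g: "g \<in> Lp_closure_poly M p W xs" and p: "0 < p"
  shows "(\<lambda>\<omega>. a * f \<omega> + b * g \<omega>) \<in> Lp_closure_poly M p W xs"
proof -
  obtain cs where cs: "\<And>n. is_poly_coeffs (cs n)"
    and cl: "(\<lambda>n. Lp_norm M p (\<lambda>\<omega>. poly_fun W (cs n) xs \<omega> - f \<omega>)) \<longlonglongrightarrow> 0"
    using f by (auto simp: Lp_closure_poly_def)
  obtain ds where ds: "\<And>n. is_poly_coeffs (ds n)"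
    and dl: "(\<lambda>n. Lp_norm M p (\<lambda>\<omega>. poly_fun W (ds n) xs \<omega> - g \<omega>)) \<longlonglongrightarrow> 0"
    using g by (auto simp: Lp_closure_poly_def)
  have fL: "in_Lp M p f" and gL: "in_Lp M p g" using f g by (auto simp: Lp_closure_poly_def)
  define es where "es n = (\<lambda>\<alpha>. a * cs n \<alpha> + b * ds n \<alpha>)" for n
  have es: "is_poly_coeffs (es n)" for n unfolding es_def by (rule poly_lin(1)[OF cs ds])
  have dfL: "in_Lp M p (\<lambda>\<omega>. 1 * poly_fun W (cs n) xs \<omega> + (-1) * f \<omega>)" for n
    by (rule in_Lp_lin(1)[OF poly_in_Lp[OF iso eta ee xsL2 cs p] fL p])
  have dgL: "in_Lp M p (\<lambda>\<omega>. 1 * poly_fun W (ds n) xs \<omega> + (-1) * g \<omega>)" for n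
    by (rule in_Lp_lin(1)[OF poly_in_Lp[OF iso eta ee xsL2 ds p] gL p])
  have I1: "(\<lambda>n. LINT \<omega>|M. cmod (poly_fun W (cs n) xs \<omega> - f \<omega>) powr p) \<longlonglongrightarrow> 0"
    using cl Lp_tendsto_iff[OF p, of M "\<lambda>n \<omega>. poly_fun W (cs n) xs \<omega> - f \<omega>"] by simp
  have I2: "(\<lambda>n. LINT \<omega>|M. cmod (poly_fun W (ds n) xs \<omega> - g \<omega>) powr p) \<longlonglongrightarrow> 0"
    using dl Lp_tendsto_iff[OF p, of M "\<lambda>n \<omega>. poly_fun W (ds n) xs \<omega> - g \<omega>"] by simp
  have bnd: "(LINT \<omega>|M. cmod (poly_fun W (es n) xs \<omega> - (a * f \<omega> + b * g \<omega>)) powr p)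
      \<le> 2 powr p * (cmod a powr p * (LINT \<omega>|M. cmod (poly_fun W (cs n) xs \<omega> - f \<omega>) powr p)
                    + cmod b powr p * (LINT \<omega>|M. cmod (poly_fun W (ds n) xs \<omega> - g \<omega>) powr p))" for n
  proof -
    have e: "poly_fun W (es n) xs \<omega> - (a * f \<omega> + b * g \<omega>)
        = a * (1 * poly_fun W (cs n) xs \<omega> + (-1) * f \<omega>) + b * (1 * poly_fun W (ds n) xs \<omega> + (-1) * g \<omega>)" for \<omega>
      unfolding es_def poly_lin(2)[OF cs ds] by (simp add: algebra_simps)
    show ?thesis unfolding e using in_Lp_lin(2)[OF dfL dgL p, where a=a and b=b] by simp
  qed
  have "(\<lambda>n. 2 powr p * (cmod a powr p * (LINT \<omega>|M. cmod (poly_fun W (cs n) xs \<omega> - f \<omega>) powr p)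
                    + cmod b powr p * (LINT \<omega>|M. cmod (poly_fun W (ds n) xs \<omega> - g \<omega>) powr p))) \<longlonglongrightarrow> 0"
    using I1 I2 by (auto intro!: tendsto_eq_intros)
  then have "(\<lambda>n. LINT \<omega>|M. cmod (poly_fun W (es n) xs \<omega> - (a * f \<omega> + b * g \<omega>)) powr p) \<longlonglongrightarrow> 0"
    by (rule Lim_null_comparison[rotated]) (use bnd LINT_powr_nonneg in \<open>auto intro!: always_eventually simp: abs_of_nonneg\<close>)
  then have "(\<lambda>n. Lp_norm M p (\<lambda>\<omega>. poly_fun W (es n) xs \<omega> - (a * f \<omega> + b * g \<omega>))) \<longlonglongrightarrow> 0"
    using Lp_tendsto_iff[OF p, of M "\<lambda>n \<omega>. poly_fun W (es n) xs \<omega> - (a * f \<omega> + b * g \<omega>)"] by simp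
  moreover have "in_Lp M p (\<lambda>\<omega>. a * f \<omega> + b * g \<omega>)" by (rule in_Lp_lin(1)[OF fL gL p])
  ultimately show ?thesis using es by (auto simp: Lp_closure_poly_def)
qed

lemma Cl_good:
  assumes f: "f \<in> Lp_closure_poly M p W xs" and p: "0 < p"
  shows "\<exists>F. F \<in> borel_measurable (PiM {..<length xs} (\<lambda>_. borel)) \<and>
    (AE \<omega> in M. f \<omega> = F (\<lambda>k\<in>{..<length xs}. W (xs!k) \<omega>))"
proof -
  obtain cs where cs: "\<And>n. is_poly_coeffs (cs n)"
    and cl: "(\<lambda>n. Lp_norm M p (\<lambda>\<omega>. poly_fun W (cs n) xs \<omega> - f \<omega>)) \<longlonglongrightarrow> 0"
    using f by (auto simp: Lp_closure_poly_def)
  have fL: "in_Lp M p f" using f by (auto simp: Lp_closure_poly_def)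
  define u where "u n \<omega> = cmod (poly_fun W (cs n) xs \<omega> - f \<omega>) powr p" for n \<omega>
  have ui: "integrable M (u n)" for n
  proof -
    have "in_Lp M p (\<lambda>\<omega>. 1 * poly_fun W (cs n) xs \<omega> + (-1) * f \<omega>)"
      by (rule in_Lp_lin(1)[OF poly_in_Lp[OF iso eta ee xsL2 cs p] fL p])
    then show ?thesis by (simp add: in_Lp_def u_def[abs_def])
  qed
  have "(\<lambda>n. LINT \<omega>|M. u n \<omega>) \<longlonglongrightarrow> 0"
    using cl Lp_tendsto_iff[OF p, of M "\<lambda>n \<omega>. poly_fun W (cs n) xs \<omega> - f \<omega>"] by (simp add: u_def)
  then have "(\<lambda>n. (\<integral>x. norm (u n x) \<partial>M)) \<longlonglongrightarrow> 0" by (simp add: u_def)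
  from tendsto_L1_AE_subseq[OF ui this]
  obtain r :: "nat \<Rightarrow> nat" where r: "strict_mono r" and ae: "AE x in M. (\<lambda>n. u (r n) x) \<longlonglongrightarrow> 0"
    by blast
  define F where "F z = lim (\<lambda>n. poly_eval (cs (r n)) (length xs) z)" for z
  have Fm: "F \<in> borel_measurable (PiM {..<length xs} (\<lambda>_. borel))"
    unfolding F_def[abs_def] by (rule borel_measurable_lim_metric) (rule poly_eval_meas)
  have "AE \<omega> in M. f \<omega> = F (\<lambda>k\<in>{..<length xs}. W (xs!k) \<omega>)"
    using ae
  proof (elim AE_mp, intro AE_I2 impI)
    fix \<omega> assume H: "(\<lambda>n. u (r n) \<omega>) \<longlonglongrightarrow> 0"
    have "(\<lambda>n. u (r n) \<omega> powr (1 / p)) \<longlonglongrightarrow> 0"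
      using H p by (intro tendsto_zero_powrI[where b="1/p"]) (auto simp: u_def)
    then have "(\<lambda>n. cmod (poly_fun W (cs (r n)) xs \<omega> - f \<omega>)) \<longlonglongrightarrow> 0"
      using p by (simp add: u_def powr_powr)
    then have "(\<lambda>n. poly_fun W (cs (r n)) xs \<omega> - f \<omega>) \<longlonglongrightarrow> 0"
      by (simp add: tendsto_norm_zero_iff)
    then have "(\<lambda>n. poly_fun W (cs (r n)) xs \<omega>) \<longlonglongrightarrow> f \<omega>"
      by (simp add: LIM_zero_iff)
    then have "(\<lambda>n. poly_eval (cs (r n)) (length xs) (\<lambda>k\<in>{..<length xs}. W (xs!k) \<omega>)) \<longlonglongrightarrow> f \<omega>"
      by (simp add: poly_fun_restrict[OF iso])
    then show "f \<omega> = F (\<lambda>k\<in>{..<length xs}. W (xs!k) \<omega>)"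
      unfolding F_def by (simp add: limI)
  qed
  then show ?thesis using Fm by blast
qed

end


theorem proposition2p8:
  fixes M :: "'a measure" and W :: "(real \<Rightarrow> real) \<Rightarrow> 'a \<Rightarrow> real"
    and \<eta> :: "real \<Rightarrow> real" and xs :: "(real \<Rightarrow> real) list"
  assumes "isonormal M W"
    and "\<eta> \<in> L2" and "set xs \<subseteq> L2"
    and "L2_lin_indep (\<eta> # xs)"
    and "ip \<eta> \<eta> = 1"
  shows "\<exists>C :: real.
     (\<forall>p :: real. p \<ge> 1 \<longrightarrow> (\<forall>c. is_poly_coeffs c \<longrightarrow>
        Lp_norm M p (poly_fun W c (map (perp \<eta>) xs)) \<le> C * Lp_norm M p (poly_fun W c xs)))
   \<and> (\<forall>p :: real. p \<ge> 1 \<longrightarrow>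
        (\<exists>T. bounded_ext M p W \<eta> xs T \<and>
          (\<forall>T'. bounded_ext M p W \<eta> xs T' \<longrightarrow>
             (\<forall>f\<in>Lp_closure_poly M p W xs. AE \<omega> in M. T' f \<omega> = T f \<omega>))))"
proof -
  note iso = assms(1) and eta = assms(2) and xsL2 = assms(3) and li = assms(4) and ee = assms(5)
  interpret M: prob_space M by (rule iso_prob[OF iso])
  obtain K where K1: "1 \<le> K" and Kb: "\<And>G. G \<in> borel_measurable (PiM {..<length xs} (\<lambda>_. borel)) \<Longrightarrow>
     (\<integral>\<^sup>+\<omega>. G (\<lambda>k\<in>{..<length xs}. W (perp \<eta> (xs!k)) \<omega>) \<partial>M)
       \<le> ennreal K * (\<integral>\<^sup>+\<omega>. G (\<lambda>k\<in>{..<length xs}. W (xs!k) \<omega>) \<partial>M)"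
    using core[OF iso eta xsL2 li ee] by blast
  define X where "X \<omega> = (\<lambda>k\<in>{..<length xs}. W (xs!k) \<omega>)" for \<omega>
  define X' where "X' \<omega> = (\<lambda>k\<in>{..<length xs}. W (perp \<eta> (xs!k)) \<omega>)" for \<omega>
  have pxsL2: "set (map (perp \<eta>) xs) \<subseteq> L2" using xsL2 eta perp_L2 by auto
  have mX[measurable]: "X \<in> measurable M (PiM {..<length xs} (\<lambda>_. borel))"
    unfolding X_def[abs_def] by (rule vec_meas[OF iso xsL2])
  have mX'[measurable]: "X' \<in> measurable M (PiM {..<length xs} (\<lambda>_. borel))"
    unfolding X'_def[abs_def]
  proof (rule measurable_restrict)
    fix k assume "k \<in> {..<length xs}"
    then have "perp \<eta> (xs!k) \<in> L2" using xsL2 eta by (auto intro!: perp_L2 dest: nth_mem)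
    then show "W (perp \<eta> (xs!k)) \<in> borel_measurable M" by (rule iso_meas[OF iso])
  qed
  have polyX: "poly_fun W c xs \<omega> = poly_eval c (length xs) (X \<omega>)" for c \<omega>
    unfolding X_def by (rule poly_fun_restrict[OF iso])
  have polyX': "poly_fun W c (map (perp \<eta>) xs) \<omega> = poly_eval c (length xs) (X' \<omega>)" for c \<omega>
    unfolding X'_def poly_fun_def length_map by (rule poly_eval_cong) auto
  have nnb: "(\<integral>\<^sup>+\<omega>. ennreal (cmod (F (X' \<omega>)) powr p) \<partial>M) \<le> ennreal K * (\<integral>\<^sup>+\<omega>. ennreal (cmod (F (X \<omega>)) powr p) \<partial>M)"
    if F[measurable]: "F \<in> borel_measurable (PiM {..<length xs} (\<lambda>_. borel))" for F :: "(nat \<Rightarrow> real) \<Rightarrow> complex" and p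
    using Kb[of "\<lambda>z. ennreal (cmod (F z) powr p)"] unfolding X_def X'_def by simp
  show ?thesis
  proof (intro exI[of _ K] conjI allI impI)
    fix p :: real and c assume p: "1 \<le> p" and c: "is_poly_coeffs c"
    show "Lp_norm M p (poly_fun W c (map (perp \<eta>) xs)) \<le> K * Lp_norm M p (poly_fun W c xs)"
    proof (rule Lp_from_nn[OF poly_in_Lp[OF iso eta ee pxsL2 c] poly_in_Lp[OF iso eta ee xsL2 c] K1 p])
      show "(\<integral>\<^sup>+\<omega>. ennreal (cmod (poly_fun W c (map (perp \<eta>) xs) \<omega>) powr p) \<partial>M)
          \<le> ennreal K * (\<integral>\<^sup>+\<omega>. ennreal (cmod (poly_fun W c xs \<omega>) powr p) \<partial>M)"
        unfolding polyX polyX' by (rule nnb) simp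
    qed (use p in auto)
  next
    fix p :: real assume p1: "1 \<le> p"
    then have p: "0 < p" by simp
    show "\<exists>T. bounded_ext M p W \<eta> xs T \<and>
          (\<forall>T'. bounded_ext M p W \<eta> xs T' \<longrightarrow>
             (\<forall>f\<in>Lp_closure_poly M p W xs. AE \<omega> in M. T' f \<omega> = T f \<omega>))"
    proof -
      let ?PM = "PiM {..<length xs} (\<lambda>_. borel) :: (nat \<Rightarrow> real) measure"
      let ?Cl = "Lp_closure_poly M p W xs"
      define good where "good f F \<longleftrightarrow> F \<in> borel_measurable ?PM \<and> (AE \<omega> in M. f \<omega> = F (X \<omega>))"
        for f :: "'a \<Rightarrow> complex" and F :: "(nat \<Rightarrow> real) \<Rightarrow> complex"
      define Fof where "Fof f = (SOME F. good f F)" for f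
      define T where "T f = (\<lambda>\<omega>. Fof f (X' \<omega>))" for f
      have FofI: "good f (Fof f)" if "good f F" for f F
        unfolding Fof_def using that by (rule someI[where P="good f"])
      have goodCl: "good f (Fof f)" if fCl: "f \<in> ?Cl" for f
      proof -
        obtain F where "good f F" using Cl_good[OF iso eta xsL2 ee fCl p] unfolding good_def X_def by blast
        then show ?thesis by (rule FofI)
      qed
      have goodP: "good (poly_fun W c xs) (Fof (poly_fun W c xs))" for c
        by (rule FofI[of _ "\<lambda>z. poly_eval c (length xs) z"]) (auto simp: good_def polyX)
      have transfer: "AE \<omega> in M. F1 (X' \<omega>) = F2 (X' \<omega>)"
        if F1[measurable]: "F1 \<in> borel_measurable ?PM" and F2[measurable]: "F2 \<in> borel_measurable ?PM"
          and ae: "AE \<omega> in M. F1 (X \<omega>) = F2 (X \<omega>)" for F1 F2 :: "(nat \<Rightarrow> real) \<Rightarrow> complex"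
      proof -
        define G where "G z = (if F1 z = F2 z then 0 else 1 :: ennreal)" for z
        have Gm: "G \<in> borel_measurable ?PM" unfolding G_def[abs_def] by measurable
        have "(\<integral>\<^sup>+\<omega>. G (X \<omega>) \<partial>M) = (\<integral>\<^sup>+\<omega>. 0 \<partial>M)"
          using ae by (intro nn_integral_cong_AE) (auto elim!: AE_mp simp: G_def)
        then have "(\<integral>\<^sup>+\<omega>. G (X' \<omega>) \<partial>M) = 0"
          using Kb[OF Gm] unfolding X_def[symmetric] X'_def[symmetric] by simp
        then have "AE \<omega> in M. G (X' \<omega>) = 0"
          using Gm by (subst (asm) nn_integral_0_iff_AE) auto
        then show ?thesis by (auto elim!: AE_mp simp: G_def split: if_splits)
      qed
      have TLp: "in_Lp M p (T f)" "Lp_norm M p (T f) \<le> K * Lp_norm M p f" if f: "f \<in> ?Cl" for f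
      proof -
        have g: "good f (Fof f)" by (rule goodCl[OF f])
        have Fm[measurable]: "Fof f \<in> borel_measurable ?PM" using g by (simp add: good_def)
        have fL: "in_Lp M p f" using f by (simp add: Lp_closure_poly_def)
        have Tm[measurable]: "T f \<in> borel_measurable M" unfolding T_def by measurable
        have eqX: "(\<integral>\<^sup>+\<omega>. ennreal (cmod (Fof f (X \<omega>)) powr p) \<partial>M) = (\<integral>\<^sup>+\<omega>. ennreal (cmod (f \<omega>) powr p) \<partial>M)"
          using g by (intro nn_integral_cong_AE) (auto elim!: AE_mp simp: good_def)
        have le: "(\<integral>\<^sup>+\<omega>. ennreal (cmod (T f \<omega>) powr p) \<partial>M) \<le> ennreal K * (\<integral>\<^sup>+\<omega>. ennreal (cmod (f \<omega>) powr p) \<partial>M)"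
          using nnb[OF Fm, of p] unfolding eqX by (simp add: T_def)
        have fin: "(\<integral>\<^sup>+\<omega>. ennreal (cmod (f \<omega>) powr p) \<partial>M) < \<infinity>"
          using fL by (subst nn_integral_eq_integral) (auto simp: in_Lp_def)
        have "(\<integral>\<^sup>+\<omega>. ennreal (norm (cmod (T f \<omega>) powr p)) \<partial>M) < \<infinity>"
          using le fin by (simp add: ennreal_mult_less_top) (meson ennreal_less_top ennreal_mult_less_top le_less_trans)
        then have "integrable M (\<lambda>\<omega>. cmod (T f \<omega>) powr p)" by (intro integrableI_bounded) auto
        then show TL: "in_Lp M p (T f)" by (simp add: in_Lp_def)
        show "Lp_norm M p (T f) \<le> K * Lp_norm M p f" by (rule Lp_from_nn[OF TL fL K1 p1 le])
      qed
      have Tpoly: "AE \<omega> in M. T (poly_fun W c xs) \<omega> = poly_fun W c (map (perp \<eta>) xs) \<omega>" for c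
      proof -
        have g: "good (poly_fun W c xs) (Fof (poly_fun W c xs))" by (rule goodP)
        then have "AE \<omega> in M. Fof (poly_fun W c xs) (X \<omega>) = poly_eval c (length xs) (X \<omega>)"
          by (auto simp: good_def polyX elim!: AE_mp)
        from transfer[OF _ _ this] g
        show ?thesis by (auto simp: good_def T_def polyX')
      qed
      have Tlin: "AE \<omega> in M. T (\<lambda>\<omega>'. a * f \<omega>' + b * g \<omega>') \<omega> = a * T f \<omega> + b * T g \<omega>"
        if f: "f \<in> ?Cl" and g: "g \<in> ?Cl" for f g a b
      proof -
        have h: "(\<lambda>\<omega>'. a * f \<omega>' + b * g \<omega>') \<in> ?Cl" by (rule Cl_lin[OF iso eta xsL2 ee f g p])
        have gh: "good (\<lambda>\<omega>'. a * f \<omega>' + b * g \<omega>') (Fof (\<lambda>\<omega>'. a * f \<omega>' + b * g \<omega>'))" by (rule goodCl[OF h])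
        have gf: "good f (Fof f)" by (rule goodCl[OF f])
        have gg: "good g (Fof g)" by (rule goodCl[OF g])
        have m: "Fof (\<lambda>\<omega>'. a * f \<omega>' + b * g \<omega>') \<in> borel_measurable ?PM"
          "(\<lambda>z. a * Fof f z + b * Fof g z) \<in> borel_measurable ?PM"
          using gh gf gg by (auto simp: good_def)
        have "AE \<omega> in M. Fof (\<lambda>\<omega>'. a * f \<omega>' + b * g \<omega>') (X \<omega>) = a * Fof f (X \<omega>) + b * Fof g (X \<omega>)"
          using gh gf gg unfolding good_def by (auto elim!: AE_mp)
        from transfer[OF m this] show ?thesis by (simp add: T_def)
      qed
      have bT: "bounded_ext M p W \<eta> xs T"
        unfolding bounded_ext_def
      proof (intro conjI ballI allI impI)
        show "\<And>f. f \<in> ?Cl \<Longrightarrow> in_Lp M p (T f)" by (rule TLp(1))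
        show "\<And>f g a b. f \<in> ?Cl \<Longrightarrow> g \<in> ?Cl \<Longrightarrow> AE \<omega> in M. T (\<lambda>\<omega>'. a * f \<omega>' + b * g \<omega>') \<omega> = a * T f \<omega> + b * T g \<omega>"
          by (rule Tlin)
        show "\<exists>K. \<forall>f\<in>?Cl. Lp_norm M p (T f) \<le> K * Lp_norm M p f" using TLp(2) by blast
        show "\<And>c. is_poly_coeffs c \<Longrightarrow> AE \<omega> in M. T (poly_fun W c xs) \<omega> = poly_fun W c (map (perp \<eta>) xs) \<omega>"
          by (rule Tpoly)
      qed
      show ?thesis
      proof (intro exI[of _ T] conjI bT allI impI ballI)
        fix T' f assume bT': "bounded_ext M p W \<eta> xs T'" and f: "f \<in> ?Cl"
        have T'L: "\<And>f. f \<in> ?Cl \<Longrightarrow> in_Lp M p (T' f)"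
          and T'lin: "\<And>f g a b. f \<in> ?Cl \<Longrightarrow> g \<in> ?Cl \<Longrightarrow>
              AE \<omega> in M. T' (\<lambda>\<omega>'. a * f \<omega>' + b * g \<omega>') \<omega> = a * T' f \<omega> + b * T' g \<omega>"
          and T'poly: "\<And>c. is_poly_coeffs c \<Longrightarrow> AE \<omega> in M. T' (poly_fun W c xs) \<omega> = poly_fun W c (map (perp \<eta>) xs) \<omega>"
          using bT' unfolding bounded_ext_def by blast+
        obtain K' where K': "\<And>f. f \<in> ?Cl \<Longrightarrow> Lp_norm M p (T' f) \<le> K' * Lp_norm M p f"
          using bT' unfolding bounded_ext_def by blast
        obtain cs where cs: "\<And>n. is_poly_coeffs (cs n)"
          and cl: "(\<lambda>n. Lp_norm M p (\<lambda>\<omega>. poly_fun W (cs n) xs \<omega> - f \<omega>)) \<longlonglongrightarrow> 0"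
          using f by (auto simp: Lp_closure_poly_def)
        define P where "P n = poly_fun W (cs n) xs" for n
        have PCl: "P n \<in> ?Cl" for n unfolding P_def by (rule Cl_poly[OF iso eta xsL2 ee cs p])
        define h where "h n = (\<lambda>\<omega>. 1 * f \<omega> + (-1) * P n \<omega>)" for n
        have hCl: "h n \<in> ?Cl" for n unfolding h_def by (rule Cl_lin[OF iso eta xsL2 ee f PCl p])
        define A where "A n = Lp_norm M p (h n)" for n
        have A0: "0 \<le> A n" for n by (simp add: A_def Lp_norm_nonneg)
        have Alim: "A \<longlonglongrightarrow> 0"
        proof -
          have "A = (\<lambda>n. Lp_norm M p (\<lambda>\<omega>. poly_fun W (cs n) xs \<omega> - f \<omega>))"
            unfolding A_def h_def P_def Lp_norm_def by (simp add: norm_minus_commute)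
          then show ?thesis using cl by simp
        qed
        have Ae: "AE \<omega> in M. T' f \<omega> - T f \<omega> = 1 * T' (h n) \<omega> + (-1) * T (h n) \<omega>" for n
        proof -
          have a1: "AE \<omega> in M. T' (h n) \<omega> = 1 * T' f \<omega> + (-1) * T' (P n) \<omega>"
            unfolding h_def by (rule T'lin[OF f PCl])
          have a2: "AE \<omega> in M. T' (P n) \<omega> = poly_fun W (cs n) (map (perp \<eta>) xs) \<omega>"
            unfolding P_def by (rule T'poly[OF cs])
          have a3: "AE \<omega> in M. T (h n) \<omega> = 1 * T f \<omega> + (-1) * T (P n) \<omega>"
            unfolding h_def by (rule Tlin[OF f PCl])
          have a4: "AE \<omega> in M. T (P n) \<omega> = poly_fun W (cs n) (map (perp \<eta>) xs) \<omega>"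
            unfolding P_def by (rule Tpoly)
          show ?thesis using a1 a2 a3 a4 by eventually_elim simp
        qed
        define D where "D \<omega> = 1 * T' f \<omega> + (-1) * T f \<omega>" for \<omega>
        have DL: "in_Lp M p D" unfolding D_def[abs_def] by (rule in_Lp_lin(1)[OF T'L[OF f] TLp(1)[OF f] p])
        have bound: "(LINT \<omega>|M. cmod (D \<omega>) powr p) \<le> 2 powr p * ((\<bar>K'\<bar> * A n) powr p + (K * A n) powr p)" for n
        proof -
          have mh: "(\<lambda>\<omega>. cmod (1 * T' (h n) \<omega> + (-1) * T (h n) \<omega>) powr p) \<in> borel_measurable M"
          proof -
            have "(\<lambda>\<omega>. 1 * T' (h n) \<omega> + (-1) * T (h n) \<omega>) \<in> borel_measurable M"
              using in_Lp_lin(1)[OF T'L[OF hCl[of n]] TLp(1)[OF hCl[of n]] p, where a=1 and b="-1"] by (simp only: in_Lp_def)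
            then show ?thesis by measurable
          qed
          have "(LINT \<omega>|M. cmod (D \<omega>) powr p) = (LINT \<omega>|M. cmod (1 * T' (h n) \<omega> + (-1) * T (h n) \<omega>) powr p)"
            using Ae[of n] DL mh by (intro integral_cong_AE) (auto simp: D_def in_Lp_def elim!: AE_mp)
          also have "\<dots> \<le> 2 powr p * (cmod (1::complex) powr p * (LINT \<omega>|M. cmod (T' (h n) \<omega>) powr p)
                + cmod (-1::complex) powr p * (LINT \<omega>|M. cmod (T (h n) \<omega>) powr p))"
            by (rule in_Lp_lin(2)[OF T'L[OF hCl[of n]] TLp(1)[OF hCl[of n]] p])
          also have "\<dots> = 2 powr p * (Lp_norm M p (T' (h n)) powr p + Lp_norm M p (T (h n)) powr p)"
            using p by (simp add: Lp_norm_powr)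
          also have "\<dots> \<le> 2 powr p * ((\<bar>K'\<bar> * A n) powr p + (K * A n) powr p)"
          proof -
            have "Lp_norm M p (T' (h n)) \<le> \<bar>K'\<bar> * A n"
              using K'[OF hCl[of n]] A0[of n] unfolding A_def
              by (meson abs_ge_self mult_right_mono order_trans)
            then have 1: "Lp_norm M p (T' (h n)) powr p \<le> (\<bar>K'\<bar> * A n) powr p"
              using p by (intro powr_mono2) (auto simp: Lp_norm_nonneg)
            have "Lp_norm M p (T (h n)) \<le> K * A n" using TLp(2)[OF hCl[of n]] unfolding A_def .
            then have 2: "Lp_norm M p (T (h n)) powr p \<le> (K * A n) powr p"
              using p by (intro powr_mono2) (auto simp: Lp_norm_nonneg)
            show ?thesis using 1 2 by (intro mult_left_mono add_mono) auto
          qed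
          finally show ?thesis .
        qed
        have lim: "(\<lambda>n. 2 powr p * ((\<bar>K'\<bar> * A n) powr p + (K * A n) powr p)) \<longlonglongrightarrow> 2 powr p * (0 + 0)"
          using p K1 A0 by (intro tendsto_intros tendsto_zero_powrI[where b=p] tendsto_mult_right_zero Alim) auto
        have "(LINT \<omega>|M. cmod (D \<omega>) powr p) \<le> 2 powr p * (0 + 0)"
          by (rule LIMSEQ_le_const[OF lim]) (use bound in auto)
        then have I0: "(LINT \<omega>|M. cmod (D \<omega>) powr p) = 0" using LINT_powr_nonneg[of M D p] by simp
        have "AE \<omega> in M. cmod (D \<omega>) powr p = 0"
          using I0 DL by (subst (asm) integral_nonneg_eq_0_iff_AE) (auto simp: in_Lp_def)
        then show "AE \<omega> in M. T' f \<omega> = T f \<omega>"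
          by (auto elim!: AE_mp simp: D_def)
      qed
    qed
  qed
qed


end
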